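(* Consider the model $X=ZL^T+E$ with $X\in\mathcal{M}(N,P)$, $Z\in\mathcal{S}(N,K)$, entries $l_{p,k}$ of $L\in\mathcal{M}(P,K)$ independent with $l_{p,k}\sim g_k\in\mathcal{G}$, and $e_{n,p}$ i.i.d. $N(0,1/\tau)$, $\tau>0$. Define, for $\mathbf{g}=(g_1,\dots,g_K)\in\mathcal{G}^K$, $Z\in\mathcal{S}(N,K)$, $\tau>0$ and $q$ a probability distribution on $\mathcal{M}(P,K)$ with finite second moments, $$F(\mathbf{g},Z,\tau,q)=\mathbb{E}_q\log p(X\mid Z,L,\tau)-\mathrm{KL}(q\,\|\,\mathbf{g}),$$ where $p(X\mid Z,L,\tau)=\prod_{n,p}N(x_{n,p};(ZL^T)_{n,p},1/\tau)$ and $\mathbf{g}(L)=\prod_{p,k}g_k(l_{p,k})$. Then: (1) (EBNM step) For fixed $Z\in\mathcal{S}(N,K)$ and $\tau$, a maximizer of $F$ over $(\mathbf{g},q)$ is obtained by taking, for each $k$, $(g_k,q_k)=\mathrm{EBNM}(X^Tz_k,1/\tau,\mathcal{G})$ and $q(L)=\prod_k q_k(l_k)$ (assuming these EBNM solutions exist). (2) (Rotation step) For fixed $\mathbf{g},q,\tau$, the maximum of $F$ over $Z\in\mathcal{S}(N,K)$ is attained at $Z=\mathrm{Polar.U}(X\bar L)$, where $\bar L=\mathbb{E}_q(L)$. (3) (Precision step) For fixed $\mathbf{g},Z,q$, provided the denominator below is positive, the maximum of $F$ over $\tau>0$ is attained at $$\tau=\frac{NP}{\|X-Z\bar L^T\|_F^2+\|V\|_{1,1}},$$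 where $V$ is the $P\times K$ matrix with $v_{p,k}=\mathrm{Var}_q(l_{p,k})$ and $\|V\|_{1,1}=\sum_{p,k}v_{p,k}$.
   Context: $\mathcal{M}(N,K)$ is the set of real $N\times K$ matrices, $\mathcal{S}(N,K)=\{M\in\mathcal{M}(N,K):M^TM=I_K\}$, $z_k$ and $l_k$ denote $k$-th columns, $\mathcal{G}$ is a prespecified family of distributions on $\mathbb{R}$. $\mathrm{KL}(q\|g)=\mathbb{E}_q[\log(q(L)/g(L))]$. For a real matrix $M$ with thin SVD $M=UDV^T$, $\mathrm{Polar.U}(M):=UV^T$. EBNM: for $x\in\mathbb{R}^P$, $s^2>0$, $\mathrm{EBNM}(x,s^2,\mathcal{G}):=\arg\max_{g\in\mathcal{G},\,q}\big(\mathbb{E}_q\log p(x\mid\eta,s^2)-\mathrm{KL}(q\|g)\big)$, where $p(x\mid\eta,s^2)=\prod_{p=1}^P N(x_p;\eta_p,s^2)$, $q$ ranges over all distributions on $\eta=(\eta_1,\dots,\eta_P)$, and $g$ is used as the i.i.d. prior $\prod_p g(\eta_p)$; it returns the optimal pair $(g,q)$. *)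

theory Defs
  imports "HOL-Probability.Probability"
begin

definition is_dist :: "'a::topological_space measure \<Rightarrow> bool" where
  "is_dist M \<longleftrightarrow> prob_space M \<and> sets M = sets borel"

definition ext_exp :: "'a measure \<Rightarrow> ('a \<Rightarrow> real) \<Rightarrow> ereal" where
  "ext_exp q f = enn2ereal (\<integral>\<^sup>+ x. ennreal (f x) \<partial>q) - enn2ereal (\<integral>\<^sup>+ x. ennreal (- f x) \<partial>q)"

definition KL :: "'a measure \<Rightarrow> 'a measure \<Rightarrow> ereal" where
  "KL q g = (if absolutely_continuous g q
             then ext_exp q (\<lambda>x. ln (enn2real (RN_deriv g q x)))
             else \<infinity>)"

definition stiefel :: "(real^'k^'n) set" where
  "stiefel = {Z. transpose Z ** Z = mat 1}"

definition frob_sq :: "real^'c^'r \<Rightarrow> real" where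
  "frob_sq M = (\<Sum>i\<in>UNIV. \<Sum>j\<in>UNIV. (M $ i $ j)\<^sup>2)"

definition thin_svd :: "real^'k^'n \<Rightarrow> real^'k^'n \<Rightarrow> real^'k^'k \<Rightarrow> real^'k^'k \<Rightarrow> bool" where
  "thin_svd M U D V \<longleftrightarrow> U \<in> stiefel \<and> transpose V ** V = mat 1 \<and>
     (\<forall>i j. i \<noteq> j \<longrightarrow> D $ i $ j = 0) \<and> (\<forall>i. D $ i $ i \<ge> 0) \<and>
     M = U ** D ** transpose V"

definition is_polarU :: "real^'k^'n \<Rightarrow> real^'k^'n \<Rightarrow> bool" where
  "is_polarU M Z \<longleftrightarrow> (\<exists>U D V. thin_svd M U D V \<and> Z = U ** transpose V)"

definition prior_vec :: "real measure \<Rightarrow> (real^'p) measure" where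
  "prior_vec g = distr (PiM UNIV (\<lambda>_. g)) borel (\<lambda>f. \<chi> p. f p)"

definition prior_mat :: "('k \<Rightarrow> real measure) \<Rightarrow> (real^'k^'p) measure" where
  "prior_mat gs = distr (PiM (UNIV :: ('p \<times> 'k) set) (\<lambda>(p,k). gs k)) borel
                        (\<lambda>f. \<chi> p. \<chi> k. f (p, k))"

definition prod_cols :: "('k \<Rightarrow> (real^'p) measure) \<Rightarrow> (real^'k^'p) measure" where
  "prod_cols qs = distr (PiM UNIV qs) borel (\<lambda>f. \<chi> p. \<chi> k. f k $ p)"

definition ebnm_obj :: "real^'p \<Rightarrow> real \<Rightarrow> real measure \<Rightarrow> (real^'p) measure \<Rightarrow> ereal" where
  "ebnm_obj x s2 g q =
     ext_exp q (\<lambda>\<eta>. ln (\<Prod>p\<in>UNIV. normal_density (\<eta> $ p) (sqrt s2) (x $ p)))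
     - KL q (prior_vec g)"

definition is_EBNM :: "real^'p \<Rightarrow> real \<Rightarrow> real measure set \<Rightarrow> real measure \<Rightarrow> (real^'p) measure \<Rightarrow> bool" where
  "is_EBNM x s2 G g q \<longleftrightarrow> g \<in> G \<and> is_dist q \<and>
     (\<forall>g'\<in>G. \<forall>q'. is_dist q' \<longrightarrow> ebnm_obj x s2 g' q' \<le> ebnm_obj x s2 g q)"

definition fin2 :: "(real^'k^'p) measure \<Rightarrow> bool" where
  "fin2 q \<longleftrightarrow> is_dist q \<and> integrable q (\<lambda>L. (norm L)\<^sup>2)"

definition loglik :: "real^'p^'n \<Rightarrow> real^'k^'n \<Rightarrow> real \<Rightarrow> real^'k^'p \<Rightarrow> real" where
  "loglik X Z \<tau> L = ln (\<Prod>n\<in>UNIV. \<Prod>p\<in>UNIV.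
       normal_density ((Z ** transpose L) $ n $ p) (sqrt (1 / \<tau>)) (X $ n $ p))"

definition Fobj :: "real^'p^'n \<Rightarrow> ('k \<Rightarrow> real measure) \<Rightarrow> real^'k^'n \<Rightarrow> real \<Rightarrow> (real^'k^'p) measure \<Rightarrow> ereal" where
  "Fobj X gs Z \<tau> q = ext_exp q (loglik X Z \<tau>) - KL q (prior_mat gs)"

definition Lbar :: "(real^'k^'p) measure \<Rightarrow> real^'k^'p" where
  "Lbar q = integral\<^sup>L q (\<lambda>L. L)"

definition Vmat :: "(real^'k^'p) measure \<Rightarrow> real^'k^'p" where
  "Vmat q = (\<chi> p. \<chi> k. integral\<^sup>L q (\<lambda>L. (L $ p $ k - Lbar q $ p $ k)\<^sup>2))"

end

theory Submission
  imports Defs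
begin


lemma stiefel_ortho:
  fixes Z :: "real^'k::finite^'n::finite"
  assumes "Z \<in> stiefel"
  shows "(\<Sum>n\<in>UNIV. Z$n$i * Z$n$j) = (if i = j then 1 else 0)"
proof -
  have "(transpose Z ** Z) $ i $ j = (mat 1 :: real^'k^'k) $ i $ j" using assms by (simp add: stiefel_def)
  thus ?thesis by (simp add: matrix_matrix_mult_def transpose_def mat_def)
qed

lemma ln_normal_density:
  assumes "\<tau> > 0"
  shows "ln (normal_density m (sqrt (1/\<tau>)) x) = - ln (2*pi/\<tau>) / 2 - \<tau> * (x - m)\<^sup>2 / 2"
proof -
  have s: "(sqrt (1/\<tau>))\<^sup>2 = 1/\<tau>" using assms by simp
  have "normal_density m (sqrt (1/\<tau>)) x = 1 / sqrt (2*pi/\<tau>) * exp (- \<tau> * (x - m)\<^sup>2 / 2)"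
    unfolding normal_density_def s using assms by (simp add: field_simps)
  also have "ln \<dots> = ln (1 / sqrt (2*pi/\<tau>)) + ln (exp (- \<tau> * (x - m)\<^sup>2 / 2))"
    using assms by (intro ln_mult_pos) auto
  also have "ln (1 / sqrt (2*pi/\<tau>)) = - ln (2*pi/\<tau>) / 2"
  proof -
    have c: "2*pi/\<tau> > 0" using assms by simp
    have "ln (1 / sqrt (2*pi/\<tau>)) = - ln (sqrt (2*pi/\<tau>))"
      using c by (simp add: ln_div)
    also have "ln (sqrt (2*pi/\<tau>)) = ln (2*pi/\<tau>) / 2"
      using c by (simp add: ln_sqrt)
    finally show ?thesis by simp
  qed
  finally show ?thesis by simp
qed

definition sqres :: "real^'p::finite^'n::finite \<Rightarrow> real^'k::finite^'n \<Rightarrow> real^'k^'p \<Rightarrow> real" where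
  "sqres X Z L = (\<Sum>n\<in>UNIV. \<Sum>p\<in>UNIV. (X$n$p - (Z ** transpose L)$n$p)\<^sup>2)"

lemma loglik_eq:
  fixes X :: "real^'p::finite^'n::finite" and Z :: "real^'k::finite^'n" and L :: "real^'k^'p"
  assumes "\<tau> > 0"
  shows "loglik X Z \<tau> L = - real (CARD('n::finite) * CARD('p::finite)) * ln (2*pi/\<tau>) / 2 - \<tau> / 2 * sqres X Z L"
proof -
  have pos: "normal_density m (sqrt (1/\<tau>)) x > 0" for m x
    using assms by (intro normal_density_pos) auto
  have "loglik X Z \<tau> L = (\<Sum>n\<in>UNIV. ln (\<Prod>p\<in>UNIV. normal_density ((Z ** transpose L) $ n $ p) (sqrt (1 / \<tau>)) (X $ n $ p)))"
    unfolding loglik_def using pos by (subst ln_prod) (auto intro!: prod_pos simp: pos[THEN less_imp_neq, symmetric])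
  also have "\<dots> = (\<Sum>n\<in>UNIV. \<Sum>p\<in>UNIV. ln (normal_density ((Z ** transpose L) $ n $ p) (sqrt (1 / \<tau>)) (X $ n $ p)))"
    using pos by (intro sum.cong refl, subst ln_prod) (auto simp: pos[THEN less_imp_neq, symmetric])
  also have "\<dots> = (\<Sum>n\<in>(UNIV::'n set). \<Sum>p\<in>(UNIV::'p set). - ln (2*pi/\<tau>) / 2 - \<tau> * (X$n$p - (Z ** transpose L)$n$p)\<^sup>2 / 2)"
    using assms by (simp add: ln_normal_density)
  also have "\<dots> = - real (CARD('n) * CARD('p)) * ln (2*pi/\<tau>) / 2 - \<tau> / 2 * sqres X Z L"
    unfolding sqres_def by (simp add: sum_subtractf sum_distrib_left sum_divide_distrib)
  finally show ?thesis .
qed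

lemma sqres_stiefel:
  fixes X :: "real^'p::finite^'n::finite" and Z :: "real^'k::finite^'n" and L :: "real^'k^'p"
  assumes "Z \<in> stiefel"
  shows "sqres X Z L = (\<Sum>n\<in>UNIV. \<Sum>p\<in>UNIV. (X$n$p)\<^sup>2)
            - 2 * (\<Sum>n\<in>UNIV. \<Sum>p\<in>UNIV. \<Sum>k\<in>UNIV. X$n$p * Z$n$k * L$p$k)
            + (\<Sum>p\<in>UNIV. \<Sum>k\<in>UNIV. (L$p$k)\<^sup>2)" (is "_ = ?R")
proof -
  have e: "(Z ** transpose L)$n$p = (\<Sum>k\<in>UNIV. Z$n$k * L$p$k)" for n p
    by (simp add: matrix_matrix_mult_def transpose_def)
  have sq: "(\<Sum>n\<in>UNIV. \<Sum>p\<in>UNIV. (\<Sum>k\<in>UNIV. Z$n$k * L$p$k)\<^sup>2) = (\<Sum>p\<in>UNIV. \<Sum>k\<in>UNIV. (L$p$k)\<^sup>2)"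
  proof -
    have "(\<Sum>n\<in>UNIV. \<Sum>p\<in>UNIV. (\<Sum>k\<in>UNIV. Z$n$k * L$p$k)\<^sup>2)
        = (\<Sum>n\<in>UNIV. \<Sum>p\<in>UNIV. \<Sum>k\<in>UNIV. \<Sum>j\<in>UNIV. (Z$n$k * Z$n$j) * (L$p$k * L$p$j))"
      by (simp add: power2_eq_square sum_product mult_ac)
    also have "\<dots> = (\<Sum>p\<in>UNIV. \<Sum>k\<in>UNIV. \<Sum>j\<in>UNIV. (\<Sum>n\<in>UNIV. Z$n$k * Z$n$j) * (L$p$k * L$p$j))"
      by (simp add: sum_distrib_right sum.swap[of _ "UNIV::'n set"])
    also have "\<dots> = (\<Sum>p\<in>UNIV. \<Sum>k\<in>UNIV. \<Sum>j\<in>UNIV. (if k = j then L$p$k * L$p$j else 0))"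
    proof -
      have d: "(if k = j then 1 else 0) * a = (if k = j then a else 0)" for k j :: 'k and a :: real by simp
      show ?thesis using stiefel_ortho[OF assms] by (simp only: d)
    qed
    also have "\<dots> = (\<Sum>p\<in>UNIV. \<Sum>k\<in>UNIV. (L$p$k)\<^sup>2)"
      by (simp add: power2_eq_square)
    finally show ?thesis .
  qed
  have "sqres X Z L = (\<Sum>n\<in>UNIV. \<Sum>p\<in>UNIV. (X$n$p)\<^sup>2 - 2 * (\<Sum>k\<in>UNIV. X$n$p * Z$n$k * L$p$k) + (\<Sum>k\<in>UNIV. Z$n$k * L$p$k)\<^sup>2)"
    unfolding sqres_def e by (intro sum.cong refl) (simp add: power2_diff sum_distrib_left mult_ac)
  also have "\<dots> = ?R"
    by (simp add: sum.distrib sum_subtractf sum_distrib_left sq)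
  finally show ?thesis .
qed


lemma normsq_vec: "(norm (x :: 'a::real_normed_vector^'p::finite))\<^sup>2 = (\<Sum>p\<in>UNIV. (norm (x$p))\<^sup>2)"
  unfolding norm_vec_def L2_set_def by (rule real_sqrt_pow2) (intro sum_nonneg, simp)

lemma normsq_mat: "(norm (L :: real^'k::finite^'p::finite))\<^sup>2 = (\<Sum>p\<in>UNIV. \<Sum>k\<in>UNIV. (L$p$k)\<^sup>2)"
  unfolding normsq_vec by simp

lemma ext_exp_integrable:
  assumes "integrable q f"
  shows "ext_exp q f = ereal (integral\<^sup>L q f)"
  unfolding ext_exp_def real_lebesgue_integral_def[OF assms]
proof -
  have a: "(\<integral>\<^sup>+ x. ennreal (f x) \<partial>q) < \<infinity>" "(\<integral>\<^sup>+ x. ennreal (- f x) \<partial>q) < \<infinity>"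
    using assms by (auto simp: real_integrable_def less_top)
  show "enn2ereal (\<integral>\<^sup>+ x. ennreal (f x) \<partial>q) - enn2ereal (\<integral>\<^sup>+ x. ennreal (- f x) \<partial>q) =
    ereal (enn2real (\<integral>\<^sup>+ x. ennreal (f x) \<partial>q) - enn2real (\<integral>\<^sup>+ x. ennreal (- f x) \<partial>q))"
    using a by (cases "\<integral>\<^sup>+ x. ennreal (f x) \<partial>q"; cases "\<integral>\<^sup>+ x. ennreal (- f x) \<partial>q")
       (auto simp: enn2real_def less_top)
qed

lemma le_one_plus_sq: "(x::real) \<le> 1 + x\<^sup>2"
proof (cases "x \<le> 1")
  case True thus ?thesis by (smt (verit) zero_le_power2)
next
  case False
  hence "x * 1 \<le> x * x" by (intro mult_left_mono) auto
  thus ?thesis by (simp add: power2_eq_square)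
qed

context
  fixes q :: "(real^'k::finite^'p::finite) measure"
  assumes F: "fin2 q"
begin

lemma fin2_prob: "prob_space q" and fin2_sets: "sets q = sets borel"
  using F by (auto simp: fin2_def is_dist_def)

lemma fin2_meas: "f \<in> borel_measurable borel \<Longrightarrow> f \<in> borel_measurable q"
  by (simp add: measurable_cong_sets[OF fin2_sets refl])

lemma fin2_nsq: "integrable q (\<lambda>L. (norm L)\<^sup>2)"
  using F by (simp add: fin2_def)

lemma fin2_int_sq: "integrable q (\<lambda>L. (L$p$k)\<^sup>2)"
proof (rule Bochner_Integration.integrable_bound[OF fin2_nsq])
  show "(\<lambda>L. (L$p$k)\<^sup>2) \<in> borel_measurable q" by (intro fin2_meas borel_measurable_continuous_onI continuous_intros)
  show "AE L in q. norm ((L$p$k)\<^sup>2) \<le> norm ((norm L)\<^sup>2)"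
  proof (intro AE_I2)
    fix L :: "real^'k^'p"
    have "(L$p$k)\<^sup>2 \<le> (\<Sum>k\<in>UNIV. (L$p$k)\<^sup>2)" by (intro member_le_sum) auto
    also have "\<dots> \<le> (\<Sum>p\<in>UNIV. \<Sum>k\<in>UNIV. (L$p$k)\<^sup>2)" by (intro member_le_sum[of _ _ "\<lambda>p. \<Sum>k\<in>UNIV. (L$p$k)\<^sup>2"]) (auto intro: sum_nonneg)
    finally show "norm ((L$p$k)\<^sup>2) \<le> norm ((norm L)\<^sup>2)" by (simp add: normsq_mat)
  qed
qed

lemma fin2_int_one: "integrable q (\<lambda>L. 1 + (norm L)\<^sup>2)"
proof -
  interpret prob_space q by (rule fin2_prob)
  show ?thesis using fin2_nsq by simp
qed

lemma fin2_int_id: "integrable q (\<lambda>L. L)"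
proof (rule Bochner_Integration.integrable_bound[OF fin2_int_one])
  show "(\<lambda>L. L) \<in> borel_measurable q" by (intro fin2_meas) measurable
  show "AE L in q. norm L \<le> norm (1 + (norm L)\<^sup>2)"
  proof (intro AE_I2)
    fix L :: "real^'k^'p"
    have "norm L \<le> 1 + (norm L)\<^sup>2" by (rule le_one_plus_sq)
    thus "norm L \<le> norm (1 + (norm L)\<^sup>2)" by simp
  qed
qed

lemma fin2_int_comp: "integrable q (\<lambda>L. L$p$k)"
  using integrable_bounded_linear[OF bounded_linear_vec_nth integrable_bounded_linear[OF bounded_linear_vec_nth fin2_int_id]]
  by simp

lemma Lbar_comp: "Lbar q $ p $ k = integral\<^sup>L q (\<lambda>L. L$p$k)"
proof -
  have "integral\<^sup>L q (\<lambda>L. L$p) = Lbar q $ p"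
    unfolding Lbar_def by (rule integral_bounded_linear[OF bounded_linear_vec_nth fin2_int_id])
  moreover have "integral\<^sup>L q (\<lambda>L. L$p$k) = integral\<^sup>L q (\<lambda>L. L$p) $ k"
    by (rule integral_bounded_linear[OF bounded_linear_vec_nth integrable_bounded_linear[OF bounded_linear_vec_nth fin2_int_id]])
  ultimately show ?thesis by simp
qed

lemma Vmat_comp: "Vmat q $ p $ k = integral\<^sup>L q (\<lambda>L. (L$p$k)\<^sup>2) - (Lbar q $ p $ k)\<^sup>2"
proof -
  interpret prob_space q by (rule fin2_prob)
  define m where "m = Lbar q $ p $ k"
  have "Vmat q $ p $ k = integral\<^sup>L q (\<lambda>L. ((L$p$k)\<^sup>2 - 2 * m * L$p$k) + m\<^sup>2)"
    unfolding Vmat_def m_def by (simp add: power2_diff algebra_simps)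
  also have "\<dots> = integral\<^sup>L q (\<lambda>L. (L$p$k)\<^sup>2 - 2 * m * L$p$k) + m\<^sup>2"
    using fin2_int_sq fin2_int_comp by (subst Bochner_Integration.integral_add) (auto simp: prob_space)
  also have "integral\<^sup>L q (\<lambda>L. (L$p$k)\<^sup>2 - 2 * m * L$p$k) = integral\<^sup>L q (\<lambda>L. (L$p$k)\<^sup>2) - 2 * m * integral\<^sup>L q (\<lambda>L. L$p$k)"
    using fin2_int_sq fin2_int_comp by (subst Bochner_Integration.integral_diff) auto
  also have i: "integral\<^sup>L q (\<lambda>L. L$p$k) = m" by (simp add: m_def Lbar_comp)
  finally show ?thesis unfolding m_def[symmetric] by (simp add: power2_eq_square)
qed

end


context
  fixes q :: "(real^'k::finite^'p::finite) measure"
  assumes F: "fin2 q"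
begin

lemma E_sqres:
  fixes X :: "real^'p^'n::finite" and Z :: "real^'k^'n"
  assumes Z: "Z \<in> stiefel"
  shows "integrable q (sqres X Z)"
    "integral\<^sup>L q (sqres X Z) = (\<Sum>n\<in>UNIV. \<Sum>p\<in>UNIV. (X$n$p)\<^sup>2)
            - 2 * (\<Sum>n\<in>UNIV. \<Sum>p\<in>UNIV. \<Sum>k\<in>UNIV. X$n$p * Z$n$k * Lbar q$p$k)
            + (\<Sum>p\<in>UNIV. \<Sum>k\<in>UNIV. integral\<^sup>L q (\<lambda>L. (L$p$k)\<^sup>2))"
proof -
  interpret prob_space q by (rule fin2_prob[OF F])
  have e: "sqres X Z = (\<lambda>L. (\<Sum>n\<in>UNIV. \<Sum>p\<in>UNIV. (X$n$p)\<^sup>2)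
            - 2 * (\<Sum>n\<in>UNIV. \<Sum>p\<in>UNIV. \<Sum>k\<in>UNIV. X$n$p * Z$n$k * L$p$k)
            + (\<Sum>p\<in>UNIV. \<Sum>k\<in>UNIV. (L$p$k)\<^sup>2))"
    using sqres_stiefel[OF Z] by auto
  have i1: "integrable q (\<lambda>L. (\<Sum>n\<in>UNIV. \<Sum>p\<in>UNIV. \<Sum>k\<in>UNIV. X$n$p * Z$n$k * L$p$k))"
    using fin2_int_comp[OF F] by (auto intro!: integrable_sum integrable_mult_right)
  have i2: "integrable q (\<lambda>L. (\<Sum>p\<in>UNIV. \<Sum>k\<in>UNIV. (L$p$k)\<^sup>2))"
    using fin2_int_sq[OF F] by (auto intro!: integrable_sum)
  show "integrable q (sqres X Z)" unfolding e using i1 i2 by simp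
  have "integral\<^sup>L q (\<lambda>L. (\<Sum>n\<in>UNIV. \<Sum>p\<in>UNIV. \<Sum>k\<in>UNIV. X$n$p * Z$n$k * L$p$k))
     = (\<Sum>n\<in>UNIV. \<Sum>p\<in>UNIV. \<Sum>k\<in>UNIV. X$n$p * Z$n$k * Lbar q$p$k)"
    using fin2_int_comp[OF F] by (simp add: Bochner_Integration.integral_sum integrable_sum Lbar_comp[OF F])
  moreover have "integral\<^sup>L q (\<lambda>L. (\<Sum>p\<in>UNIV. \<Sum>k\<in>UNIV. (L$p$k)\<^sup>2)) = (\<Sum>p\<in>UNIV. \<Sum>k\<in>UNIV. integral\<^sup>L q (\<lambda>L. (L$p$k)\<^sup>2))"
    using fin2_int_sq[OF F] by (simp add: Bochner_Integration.integral_sum integrable_sum)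
  ultimately show "integral\<^sup>L q (sqres X Z) = (\<Sum>n\<in>UNIV. \<Sum>p\<in>UNIV. (X$n$p)\<^sup>2)
            - 2 * (\<Sum>n\<in>UNIV. \<Sum>p\<in>UNIV. \<Sum>k\<in>UNIV. X$n$p * Z$n$k * Lbar q$p$k)
            + (\<Sum>p\<in>UNIV. \<Sum>k\<in>UNIV. integral\<^sup>L q (\<lambda>L. (L$p$k)\<^sup>2))"
    unfolding e using i1 i2 by (simp add: prob_space)
qed

lemma E_sqres_V:
  fixes X :: "real^'p^'n::finite" and Z :: "real^'k^'n"
  assumes Z: "Z \<in> stiefel"
  shows "integral\<^sup>L q (sqres X Z) = frob_sq (X - Z ** transpose (Lbar q)) + (\<Sum>p\<in>UNIV. \<Sum>k\<in>UNIV. Vmat q $ p $ k)"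
proof -
  have "frob_sq (X - Z ** transpose (Lbar q)) = sqres X Z (Lbar q)"
    unfolding frob_sq_def sqres_def by simp
  also have "\<dots> = (\<Sum>n\<in>UNIV. \<Sum>p\<in>UNIV. (X$n$p)\<^sup>2)
            - 2 * (\<Sum>n\<in>UNIV. \<Sum>p\<in>UNIV. \<Sum>k\<in>UNIV. X$n$p * Z$n$k * Lbar q$p$k)
            + (\<Sum>p\<in>UNIV. \<Sum>k\<in>UNIV. (Lbar q$p$k)\<^sup>2)" by (rule sqres_stiefel[OF Z])
  finally show ?thesis unfolding E_sqres(2)[OF Z] Vmat_comp[OF F]
    by (simp add: sum_subtractf)
qed

lemma E_loglik:
  fixes X :: "real^'p^'n::finite" and Z :: "real^'k^'n"
  assumes Z: "Z \<in> stiefel" and t: "\<tau> > 0"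
  shows "ext_exp q (loglik X Z \<tau>) = ereal (- real (CARD('n) * CARD('p)) * ln (2*pi/\<tau>) / 2 - \<tau> / 2 * integral\<^sup>L q (sqres X Z))"
proof -
  interpret prob_space q by (rule fin2_prob[OF F])
  have e: "loglik X Z \<tau> = (\<lambda>L. - real (CARD('n) * CARD('p)) * ln (2*pi/\<tau>) / 2 - \<tau> / 2 * sqres X Z L)"
    using loglik_eq[OF t] by auto
  have i: "integrable q (loglik X Z \<tau>)" unfolding e using E_sqres(1)[OF Z] by simp
  show ?thesis unfolding ext_exp_integrable[OF i] unfolding e using E_sqres(1)[OF Z] by (simp add: prob_space)
qed

end


lemma ext_exp_cong_AE:
  assumes "AE x in Q. f x = g x"
  shows "ext_exp Q f = ext_exp Q g"
proof -
  have "(\<integral>\<^sup>+ x. ennreal (f x) \<partial>Q) = (\<integral>\<^sup>+ x. ennreal (g x) \<partial>Q)"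
    using assms by (intro nn_integral_cong_AE) auto
  moreover have "(\<integral>\<^sup>+ x. ennreal (- f x) \<partial>Q) = (\<integral>\<^sup>+ x. ennreal (- g x) \<partial>Q)"
    using assms by (intro nn_integral_cong_AE) auto
  ultimately show ?thesis unfolding ext_exp_def by simp
qed

lemma ext_exp_lt_top:
  assumes Q: "prob_space Q" and B: "\<And>x. f x \<le> B"
  shows "ext_exp Q f < \<infinity>"
proof -
  interpret prob_space Q by (rule Q)
  have "(\<integral>\<^sup>+ x. ennreal (f x) \<partial>Q) \<le> (\<integral>\<^sup>+ x. ennreal (max B 0) \<partial>Q)"
    using B by (intro nn_integral_mono) (auto intro: ennreal_leI max.coboundedI1)
  also have "\<dots> = ennreal (max B 0)" by (simp add: emeasure_space_1)
  finally have "(\<integral>\<^sup>+ x. ennreal (f x) \<partial>Q) < \<infinity>" using le_less_trans by fastforce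
  then obtain a where a: "(\<integral>\<^sup>+ x. ennreal (f x) \<partial>Q) = ennreal a" "a \<ge> 0"
    by (cases "(\<integral>\<^sup>+ x. ennreal (f x) \<partial>Q)") auto
  show ?thesis unfolding ext_exp_def a
    by (cases "\<integral>\<^sup>+ x. ennreal (- f x) \<partial>Q") (auto simp: a)
qed

lemma ext_exp_integrable_iff:
  assumes m: "f \<in> borel_measurable Q" and "ext_exp Q f \<noteq> \<infinity>" "ext_exp Q f \<noteq> -\<infinity>"
  shows "integrable Q f"
proof -
  have "(\<integral>\<^sup>+ x. ennreal (f x) \<partial>Q) \<noteq> \<infinity> \<and> (\<integral>\<^sup>+ x. ennreal (- f x) \<partial>Q) \<noteq> \<infinity>"
    using assms(2,3) unfolding ext_exp_def
    by (cases "\<integral>\<^sup>+ x. ennreal (f x) \<partial>Q"; cases "\<integral>\<^sup>+ x. ennreal (- f x) \<partial>Q") auto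
  with m show ?thesis by (simp add: real_integrable_def)
qed

lemma ext_exp_neq_minf:
  assumes "(\<integral>\<^sup>+ x. ennreal (- f x) \<partial>Q) < \<infinity>"
  shows "ext_exp Q f \<noteq> -\<infinity>"
  using assms unfolding ext_exp_def
  by (cases "\<integral>\<^sup>+ x. ennreal (f x) \<partial>Q"; cases "\<integral>\<^sup>+ x. ennreal (- f x) \<partial>Q") auto

lemma neg_xlnx_le: "t \<ge> 0 \<Longrightarrow> t * max 0 (- ln t) \<le> (1::real)"
proof (cases "t = 0")
  case False
  assume t: "t \<ge> 0"
  hence tp: "t > 0" using False by simp
  show ?thesis
  proof (cases "t \<le> 1")
    case True
    have "ln (1/t) \<le> 1/t - 1" using tp by (intro ln_le_minus_one) simp
    hence "- ln t \<le> 1/t - 1" using tp by (simp add: ln_div)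
    hence "t * (- ln t) \<le> t * (1/t - 1)" using tp by (intro mult_left_mono) auto
    also have "\<dots> = 1 - t" using tp by (simp add: field_simps)
    finally show ?thesis using tp True by (auto simp: max_def)
  next
    case False
    hence "ln t > 0" by simp
    thus ?thesis by (simp add: max_def)
  qed
qed simp

lemma KL_not_minf:
  assumes P: "prob_space P" and Q: "prob_space Q" and S: "sets Q = sets P"
  shows "KL Q P \<noteq> -\<infinity>"
proof (cases "absolutely_continuous P Q")
  case True
  interpret P: prob_space P by (rule P)
  define r where "r = RN_deriv P Q"
  have Qd: "density P r = Q" unfolding r_def by (rule P.density_RN_deriv[OF True S])
  have rm[measurable]: "r \<in> borel_measurable P" unfolding r_def by simp
  have "(\<integral>\<^sup>+ x. ennreal (- ln (enn2real (r x))) \<partial>Q) = (\<integral>\<^sup>+ x. r x * ennreal (- ln (enn2real (r x))) \<partial>P)"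
    unfolding Qd[symmetric] by (rule nn_integral_density) auto
  also have "\<dots> \<le> (\<integral>\<^sup>+ x. 1 \<partial>P)"
  proof (intro nn_integral_mono)
    fix x
    show "r x * ennreal (- ln (enn2real (r x))) \<le> 1"
    proof (cases "r x")
      case (real t)
      show ?thesis
      proof (cases "- ln t \<le> 0")
        case True thus ?thesis using real by (simp add: ennreal_neg)
      next
        case False
        hence "r x * ennreal (- ln (enn2real (r x))) = ennreal (t * (- ln t))"
          using real by (simp add: ennreal_mult'[symmetric])
        also have "\<dots> \<le> ennreal 1"
        proof (rule ennreal_leI)
          show "t * (- ln t) \<le> 1" using neg_xlnx_le[of t] real False by (simp add: max_def)
        qed
        also have "ennreal 1 = 1" by simp
        finally show ?thesis .
      qed
    qed simp
  qed
  also have "\<dots> = 1" by (simp add: P.emeasure_space_1)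
  finally have "(\<integral>\<^sup>+ x. ennreal (- ln (enn2real (r x))) \<partial>Q) < \<infinity>" using le_less_trans by fastforce
  hence "ext_exp Q (\<lambda>x. ln (enn2real (r x))) \<noteq> -\<infinity>" by (intro ext_exp_neq_minf) simp
  thus ?thesis unfolding KL_def using True r_def by simp
qed (simp add: KL_def)


lemma ereal_minf_minus: "K \<noteq> -\<infinity> \<Longrightarrow> -\<infinity> - K = (-\<infinity> :: ereal)"
  by (cases K) auto

lemma ereal_minus_inf: "a < \<infinity> \<Longrightarrow> a - \<infinity> = (-\<infinity> :: ereal)"
  by (cases a) auto

lemma exp_integral_pos:
  fixes f :: "'a \<Rightarrow> real"
  assumes P: "prob_space P" and fm: "f \<in> borel_measurable P" and B: "\<And>x. f x \<le> B"
  shows "integrable P (\<lambda>x. exp (f x))" "(\<integral>x. exp (f x) \<partial>P) > 0"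
proof -
  interpret P: prob_space P by (rule P)
  show ie: "integrable P (\<lambda>x. exp (f x))"
  proof (rule P.integrable_const_bound[where B="exp B"])
    show "AE x in P. norm (exp (f x)) \<le> exp B" using B by auto
    show "(\<lambda>x. exp (f x)) \<in> borel_measurable P" using fm by measurable
  qed
  have "(\<integral>x. exp (f x) \<partial>P) \<ge> 0" by (intro integral_nonneg_AE) auto
  moreover have "(\<integral>x. exp (f x) \<partial>P) \<noteq> 0"
  proof
    assume "(\<integral>x. exp (f x) \<partial>P) = 0"
    hence "AE x in P. exp (f x) = 0" using integral_nonneg_eq_0_iff_AE[OF ie] by auto
    hence "AE x in P. False" by auto
    thus False by (simp add: P.AE_False)
  qed
  ultimately show "(\<integral>x. exp (f x) \<partial>P) > 0" by linarith
qed

lemma gibbs: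
  fixes f :: "'a \<Rightarrow> real"
  assumes P: "prob_space P" and Q: "prob_space Q" and S: "sets Q = sets P"
    and fm: "f \<in> borel_measurable P" and B: "\<And>x. f x \<le> B"
  shows "ext_exp Q f - KL Q P \<le> ereal (ln (\<integral>x. exp (f x) \<partial>P))"
proof -
  interpret P: prob_space P by (rule P)
  interpret Q: prob_space Q by (rule Q)
  define Zc where "Zc = (\<integral>x. exp (f x) \<partial>P)"
  have ie: "integrable P (\<lambda>x. exp (f x))" and Zp: "Zc > 0"
    using exp_integral_pos[OF P fm B] by (auto simp: Zc_def)
  have Qm: "f \<in> borel_measurable Q" using fm by (simp add: measurable_cong_sets[OF S refl])
  have lt: "ext_exp Q f < \<infinity>" by (rule ext_exp_lt_top[OF Q B])
  have Kn: "KL Q P \<noteq> -\<infinity>" by (rule KL_not_minf[OF P Q S])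
  show ?thesis
  proof (cases "absolutely_continuous P Q")
    case False
    hence "KL Q P = \<infinity>" by (simp add: KL_def)
    thus ?thesis using lt by (simp add: ereal_minus_inf)
  next
    case AC: True
    define r where "r = RN_deriv P Q"
    have Qd: "density P r = Q" unfolding r_def by (rule P.density_RN_deriv[OF AC S])
    have rm[measurable]: "r \<in> borel_measurable P" unfolding r_def by simp
    define g where "g = (\<lambda>x. ln (enn2real (r x)))"
    have KLg: "KL Q P = ext_exp Q g" using AC by (simp add: KL_def g_def r_def)
    have gm: "g \<in> borel_measurable Q" unfolding g_def measurable_cong_sets[OF S refl] by measurable
    show ?thesis
    proof (cases "ext_exp Q f = -\<infinity>")
      case True thus ?thesis using Kn by (simp add: ereal_minf_minus)
    next
      case fn: False
      show ?thesis
      proof (cases "KL Q P = \<infinity>")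
        case True thus ?thesis using lt by (simp add: ereal_minus_inf)
      next
        case kn: False
        have iF: "integrable Q f" using lt fn by (intro ext_exp_integrable_iff[OF Qm]) auto
        have iG: "integrable Q g" using kn Kn unfolding KLg by (intro ext_exp_integrable_iff[OF gm]) auto
        have A1: "AE x in Q. r x \<noteq> \<infinity>"
          using absolutely_continuous_AE[OF S AC P.RN_deriv_finite[OF Q.sigma_finite_measure_axioms AC S]]
          by (simp add: r_def)
        have "AE x in density P r. r x \<noteq> 0" by (subst AE_density[OF rm]) auto
        hence A2: "AE x in Q. r x \<noteq> 0" unfolding Qd .
        have pos: "AE x in Q. 0 < enn2real (r x)" using A1 A2
          by eventually_elim (auto simp: enn2real_positive_iff top.not_eq_extremum zero_less_iff_neq_zero)
        define u where "u x = exp (f x) / (enn2real (r x) * Zc)" for x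
        have um: "u \<in> borel_measurable Q"
          unfolding u_def using Qm by (simp add: measurable_cong_sets[OF S refl])
        have "(\<integral>\<^sup>+ x. ennreal (u x) \<partial>Q) = (\<integral>\<^sup>+ x. r x * ennreal (u x) \<partial>P)"
          unfolding Qd[symmetric] using um by (intro nn_integral_density) (auto simp: measurable_cong_sets[OF S refl])
        also have "\<dots> \<le> (\<integral>\<^sup>+ x. ennreal (exp (f x) / Zc) \<partial>P)"
        proof (intro nn_integral_mono)
          fix x
          show "r x * ennreal (u x) \<le> ennreal (exp (f x) / Zc)"
          proof (cases "r x")
            case (real t)
            show ?thesis
            proof (cases "t = 0")
              case True thus ?thesis using real by simp
            next
              case False
              hence "t * u x = exp (f x) / Zc" using real Zp by (simp add: u_def field_simps)
              thus ?thesis using real by (simp add: ennreal_mult'[symmetric] u_def)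
            qed
          next
            case top
            hence "u x = 0" by (simp add: u_def)
            thus ?thesis by simp
          qed
        qed
        also have "\<dots> = ennreal (\<integral>x. exp (f x) / Zc \<partial>P)"
          using ie Zp by (intro nn_integral_eq_integral) auto
        also have "(\<integral>x. exp (f x) / Zc \<partial>P) = 1" using Zp by (simp add: Zc_def)
        finally have nn: "(\<integral>\<^sup>+ x. ennreal (u x) \<partial>Q) \<le> 1" by simp
        have u0: "u x \<ge> 0" for x using Zp by (simp add: u_def)
        have iu: "integrable Q u"
          using nn u0 um by (intro integrableI_nonneg) (auto simp: le_less_trans)
        have Iu: "(\<integral>x. u x \<partial>Q) \<le> 1"
        proof -
          have "(\<integral>x. u x \<partial>Q) = enn2real (\<integral>\<^sup>+ x. ennreal (u x) \<partial>Q)"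
            using um u0 by (intro integral_eq_nn_integral) auto
          also have "\<dots> \<le> enn2real 1" using nn by (intro enn2real_mono) auto
          finally show ?thesis by simp
        qed
        have pw: "AE x in Q. f x - g x - ln Zc \<le> u x - 1"
          using pos
        proof eventually_elim
          case (elim x)
          define t where "t = enn2real (r x)"
          have t: "t > 0" using elim by (simp add: t_def)
          have "ln (exp (f x) / (t * Zc)) \<le> exp (f x) / (t * Zc) - 1"
            using t Zp by (intro ln_le_minus_one) simp
          moreover have "ln (exp (f x) / (t * Zc)) = f x - ln t - ln Zc"
            using t Zp by (simp add: ln_div ln_mult)
          ultimately show ?case by (simp add: g_def u_def t_def)
        qed
        have "(\<integral>x. f x - g x - ln Zc \<partial>Q) \<le> (\<integral>x. u x - 1 \<partial>Q)"
          using iF iG iu by (intro integral_mono_AE pw) auto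
        hence "(\<integral>x. f x \<partial>Q) - (\<integral>x. g x \<partial>Q) - ln Zc \<le> (\<integral>x. u x \<partial>Q) - 1"
          using iF iG iu by (simp add: Q.prob_space)
        hence "(\<integral>x. f x \<partial>Q) - (\<integral>x. g x \<partial>Q) \<le> ln Zc" using Iu by simp
        thus ?thesis unfolding KLg ext_exp_integrable[OF iF] ext_exp_integrable[OF iG] Zc_def by simp
      qed
    qed
  qed
qed


lemma exp_times_bound:
  fixes y B :: real
  assumes "y \<le> B"
  shows "\<bar>exp y * y\<bar> \<le> exp B * \<bar>B\<bar> + 1"
proof (cases "y \<ge> 0")
  case True
  hence "exp y * y \<le> exp B * B" using assms by (intro mult_mono) auto
  have "\<bar>exp y * y\<bar> = exp y * y" using True by simp
  moreover have "exp B * B \<le> exp B * \<bar>B\<bar>" by (intro mult_left_mono) auto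
  ultimately show ?thesis using \<open>exp y * y \<le> exp B * B\<close> by linarith
next
  case False
  have "1 + (- y) \<le> exp (- y)" by (rule exp_ge_add_one_self)
  hence "exp y * (- y) \<le> exp y * exp (- y)" using False by (intro mult_left_mono) auto
  also have "\<dots> = 1" by (simp add: exp_minus field_simps)
  finally have "\<bar>exp y * y\<bar> \<le> 1" using False by (simp add: abs_if mult_less_0_iff)
  moreover have "0 \<le> exp B * \<bar>B\<bar>" by simp
  ultimately show ?thesis by linarith
qed

lemma gibbs_attain:
  fixes f :: "'a \<Rightarrow> real"
  assumes P: "prob_space P" and fm[measurable]: "f \<in> borel_measurable P" and B: "\<And>x. f x \<le> B"
  defines "Zc \<equiv> (\<integral>x. exp (f x) \<partial>P)"
  defines "Qs \<equiv> density P (\<lambda>x. ennreal (exp (f x) / Zc))"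
  shows "prob_space Qs" "sets Qs = sets P" "ext_exp Qs f - KL Qs P = ereal (ln Zc)"
proof -
  interpret P: prob_space P by (rule P)
  have ie: "integrable P (\<lambda>x. exp (f x))" and Zp: "Zc > 0"
    using exp_integral_pos[OF P fm B] by (auto simp: Zc_def)
  define w where "w = (\<lambda>x. exp (f x) / Zc)"
  have wm[measurable]: "w \<in> borel_measurable P" unfolding w_def by measurable
  have w0: "w x \<ge> 0" for x using Zp by (simp add: w_def)
  have Qsw: "Qs = density P (\<lambda>x. ennreal (w x))" by (simp add: Qs_def w_def)
  show S: "sets Qs = sets P" by (simp add: Qsw)
  have "emeasure Qs (space Qs) = (\<integral>\<^sup>+ x. ennreal (w x) * indicator (space P) x \<partial>P)"
    unfolding Qsw space_density by (rule emeasure_density) auto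
  also have "\<dots> = (\<integral>\<^sup>+ x. ennreal (w x) \<partial>P)"
    by (intro nn_integral_cong) simp
  also have "\<dots> = ennreal (\<integral>x. w x \<partial>P)"
    using ie w0 by (intro nn_integral_eq_integral) (auto simp: w_def)
  also have "(\<integral>x. w x \<partial>P) = 1" using Zp by (simp add: w_def Zc_def)
  finally show Qp: "prob_space Qs" by (intro prob_spaceI) simp
  interpret Q: prob_space Qs by (rule Qp)
  have AC: "absolutely_continuous P Qs" unfolding Qsw by (intro absolutely_continuousI_density) simp
  have "AE x in P. ennreal (w x) = RN_deriv P Qs x"
    by (rule P.RN_deriv_unique) (auto simp: Qsw)
  hence "AE x in Qs. ennreal (w x) = RN_deriv P Qs x" by (rule absolutely_continuous_AE[OF S AC])
  hence "AE x in Qs. ln (enn2real (RN_deriv P Qs x)) = f x - ln Zc"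
  proof eventually_elim
    case (elim x)
    hence "enn2real (RN_deriv P Qs x) = w x" using w0 by (metis enn2real_ennreal)
    thus ?case using Zp by (simp add: w_def ln_div)
  qed
  hence KLe: "KL Qs P = ext_exp Qs (\<lambda>x. f x - ln Zc)"
    using AC by (simp add: KL_def ext_exp_cong_AE)
  have iF: "integrable Qs f"
  proof -
    have "integrable P (\<lambda>x. w x *\<^sub>R f x)"
    proof (rule P.integrable_const_bound[where B="(exp B * \<bar>B\<bar> + 1) / Zc"])
      show "AE x in P. norm (w x *\<^sub>R f x) \<le> (exp B * \<bar>B\<bar> + 1) / Zc"
      proof (intro AE_I2)
        fix x
        have "norm (w x *\<^sub>R f x) = \<bar>exp (f x) * f x\<bar> / Zc" using Zp by (simp add: w_def abs_mult)
        also have "\<dots> \<le> (exp B * \<bar>B\<bar> + 1) / Zc" using Zp exp_times_bound[OF B] by (intro divide_right_mono) auto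
        finally show "norm (w x *\<^sub>R f x) \<le> (exp B * \<bar>B\<bar> + 1) / Zc" .
      qed
    qed simp
    thus ?thesis unfolding Qsw using w0 by (subst integrable_density) auto
  qed
  have iF': "integrable Qs (\<lambda>x. f x - ln Zc)" using iF by simp
  show "ext_exp Qs f - KL Qs P = ereal (ln Zc)"
    unfolding KLe ext_exp_integrable[OF iF] ext_exp_integrable[OF iF'] using iF by (simp add: Q.prob_space)
qed


lemma meas_vec:
  "(\<lambda>f. \<chi> i. f i) \<in> measurable (PiM (UNIV::'i::finite set) (\<lambda>_. borel :: real measure)) (borel :: (real^'i) measure)"
proof -
  have "(\<lambda>f. \<chi> i. f i) \<in> borel_measurable (borel :: ('i \<Rightarrow> real) measure)"
    by (intro borel_measurable_continuous_onI continuous_on_vec_lambda continuous_on_product_coordinates)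
  thus ?thesis using sets_PiM_equal_borel measurable_cong_sets by blast
qed

lemma meas_vec2:
  "(\<lambda>f. \<chi> i. f i) \<in> measurable (PiM (UNIV::'i::finite set) (\<lambda>_. borel :: ('a::euclidean_space) measure)) (borel :: ('a^'i) measure)"
proof -
  have "(\<lambda>f. \<chi> i. f i) \<in> borel_measurable (borel :: ('i \<Rightarrow> 'a) measure)"
    by (intro borel_measurable_continuous_onI continuous_on_vec_lambda continuous_on_product_coordinates)
  thus ?thesis using sets_PiM_equal_borel measurable_cong_sets by blast
qed


lemma pps: "(\<And>i. prob_space (M i)) \<Longrightarrow> product_prob_space M"
  by (simp add: product_prob_space_def product_sigma_finite_def product_prob_space_axioms_def prob_space_imp_sigma_finite)

lemma meas_PiM_cont:
  fixes F :: "('i::finite \<Rightarrow> 'a::euclidean_space) \<Rightarrow> 'b::topological_space"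
  assumes c: "continuous_on UNIV F" and S: "\<And>i. sets (M i) = sets borel"
  shows "F \<in> measurable (PiM UNIV M) borel"
proof -
  have "F \<in> borel_measurable (borel :: ('i \<Rightarrow> 'a) measure)" by (rule borel_measurable_continuous_onI[OF c])
  hence "F \<in> measurable (PiM UNIV (\<lambda>_. borel :: 'a measure)) borel"
    using sets_PiM_equal_borel measurable_cong_sets by blast
  moreover have "sets (PiM UNIV M) = sets (PiM UNIV (\<lambda>_. borel :: 'a measure))"
    using S by (intro sets_PiM_cong) auto
  ultimately show ?thesis using measurable_cong_sets by blast
qed

lemma PiM_distr:
  assumes fin: "finite I" and M: "\<And>i. prob_space (M i)" and f: "\<And>i. f i \<in> measurable (M i) (N i)"
  shows "PiM I (\<lambda>i. distr (M i) (N i) (f i)) = distr (PiM I M) (PiM I N) (\<lambda>x. \<lambda>i\<in>I. f i (x i))"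
proof -
  interpret MM: product_prob_space M I by (rule pps[OF M])
  have D: "prob_space (distr (M i) (N i) (f i))" for i
    using M f by (intro prob_space.prob_space_distr) auto
  interpret DD: product_prob_space "\<lambda>i. distr (M i) (N i) (f i)" I by (rule pps[OF D])
  have mF: "(\<lambda>x. \<lambda>i\<in>I. f i (x i)) \<in> measurable (PiM I M) (PiM I N)"
    using f by (intro measurable_restrict) (auto intro: measurable_compose[OF measurable_component_singleton])
  show ?thesis
  proof (rule DD.PiM_eqI[OF fin, symmetric])
    show "sets (distr (PiM I M) (PiM I N) (\<lambda>x. \<lambda>i\<in>I. f i (x i))) = sets (PiM I (\<lambda>i. distr (M i) (N i) (f i)))"
      by (simp add: sets_PiM_cong[OF refl sets_distr])
    fix A assume A: "\<And>i. i \<in> I \<Longrightarrow> A i \<in> sets (distr (M i) (N i) (f i))"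
    hence AN: "\<And>i. i \<in> I \<Longrightarrow> A i \<in> sets (N i)" by simp
    have "Pi\<^sub>E I A \<in> sets (PiM I N)" using AN fin by (intro sets_PiM_I_finite) auto
    hence "emeasure (distr (PiM I M) (PiM I N) (\<lambda>x. \<lambda>i\<in>I. f i (x i))) (Pi\<^sub>E I A)
        = emeasure (PiM I M) ((\<lambda>x. \<lambda>i\<in>I. f i (x i)) -` Pi\<^sub>E I A \<inter> space (PiM I M))"
      by (rule emeasure_distr[OF mF])
    also have "(\<lambda>x. \<lambda>i\<in>I. f i (x i)) -` Pi\<^sub>E I A \<inter> space (PiM I M) = Pi\<^sub>E I (\<lambda>i. f i -` A i \<inter> space (M i))"
      by (auto simp: space_PiM PiE_iff)
    also have "emeasure (PiM I M) \<dots> = (\<Prod>i\<in>I. emeasure (M i) (f i -` A i \<inter> space (M i)))"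
      using AN f fin by (intro MM.emeasure_PiM) (auto intro: measurable_sets)
    also have "\<dots> = (\<Prod>i\<in>I. emeasure (distr (M i) (N i) (f i)) (A i))"
      using AN f by (intro prod.cong refl) (simp add: emeasure_distr)
    finally show "emeasure (distr (PiM I M) (PiM I N) (\<lambda>x. \<lambda>i\<in>I. f i (x i))) (Pi\<^sub>E I A) = (\<Prod>i\<in>I. emeasure (distr (M i) (N i) (f i)) (A i))" .
  qed
qed


lemma regroup_meas:
  "(\<lambda>x. \<lambda>(p,k). x k p) \<in> measurable (PiM (UNIV::'k set) (\<lambda>k. PiM (UNIV::'p set) (\<lambda>_. g k))) (PiM UNIV (\<lambda>(p,k). g k))"
proof -
  have "(\<lambda>x i. (case i of (p,k) \<Rightarrow> x k p)) \<in> measurable (PiM (UNIV::'k set) (\<lambda>k. PiM (UNIV::'p set) (\<lambda>_. g k))) (PiM UNIV (\<lambda>(p,k). g k))"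
  proof (rule measurable_PiM_single')
    fix i :: "'p \<times> 'k"
    obtain p k where i: "i = (p,k)" by (cases i)
    have "(\<lambda>x. x k p) \<in> measurable (PiM (UNIV::'k set) (\<lambda>k. PiM (UNIV::'p set) (\<lambda>_. g k))) (g k)"
      by (rule measurable_compose[OF measurable_component_singleton[of k] measurable_component_singleton[of p]]) auto
    thus "(\<lambda>x. case i of (p, k) \<Rightarrow> x k p) \<in> measurable (PiM (UNIV::'k set) (\<lambda>k. PiM (UNIV::'p set) (\<lambda>_. g k))) (case i of (p, k) \<Rightarrow> g k)"
      by (simp add: i)
  next
    show "(\<lambda>x i. (case i of (p,k) \<Rightarrow> x k p)) \<in> space (PiM (UNIV::'k set) (\<lambda>k. PiM (UNIV::'p set) (\<lambda>_. g k))) \<rightarrow> (\<Pi>\<^sub>E i\<in>UNIV. space (case i of (p, k) \<Rightarrow> g k))"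
      by (auto simp: space_PiM PiE_iff split: prod.split)
  qed
  thus ?thesis by (simp add: case_prod_beta')
qed

lemma regroup:
  fixes g :: "'k::finite \<Rightarrow> 'a measure"
  assumes G: "\<And>k. prob_space (g k)"
  shows "PiM (UNIV::('p::finite \<times> 'k) set) (\<lambda>(p,k). g k) = distr (PiM (UNIV::'k set) (\<lambda>k. PiM (UNIV::'p set) (\<lambda>_. g k))) (PiM (UNIV::('p \<times> 'k) set) (\<lambda>(p,k). g k)) (\<lambda>x. \<lambda>(p,k). x k p)"
proof -
  interpret GG: product_prob_space "\<lambda>(p,k). g k" "UNIV :: ('p \<times> 'k) set"
    by (rule pps) (auto simp: G split: prod.split)
  have G1: "prob_space (PiM (UNIV::'p set) (\<lambda>_. g k))" for k by (rule prob_space_PiM) (simp add: G)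
  interpret KK: product_prob_space "\<lambda>k. PiM (UNIV::'p set) (\<lambda>_. g k)" "UNIV :: 'k set"
    by (rule pps[OF G1])
  show ?thesis
  proof (rule GG.PiM_eqI[OF finite_class.finite_UNIV, symmetric])
    show "sets (distr (PiM (UNIV::'k set) (\<lambda>k. PiM (UNIV::'p set) (\<lambda>_. g k))) (PiM (UNIV::('p \<times> 'k) set) (\<lambda>(p,k). g k)) (\<lambda>x. \<lambda>(p,k). x k p)) = sets (PiM (UNIV::('p \<times> 'k) set) (\<lambda>(p,k). g k))"
      by simp
    fix A :: "'p \<times> 'k \<Rightarrow> 'a set" assume A: "\<And>i. i \<in> UNIV \<Longrightarrow> A i \<in> sets (case i of (p, k) \<Rightarrow> g k)"
    have Ak: "A (p,k) \<in> sets (g k)" for p k using A[of "(p,k)"] by simp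
    have "Pi\<^sub>E (UNIV::('p \<times> 'k) set) A \<in> sets (PiM (UNIV::('p \<times> 'k) set) (\<lambda>(p,k). g k))" using A by (intro sets_PiM_I_finite) (auto simp: finite_class.finite_UNIV)
    hence "emeasure (distr (PiM (UNIV::'k set) (\<lambda>k. PiM (UNIV::'p set) (\<lambda>_. g k))) (PiM (UNIV::('p \<times> 'k) set) (\<lambda>(p,k). g k)) (\<lambda>x. \<lambda>(p,k). x k p)) (Pi\<^sub>E (UNIV::('p \<times> 'k) set) A)
       = emeasure (PiM (UNIV::'k set) (\<lambda>k. PiM (UNIV::'p set) (\<lambda>_. g k))) ((\<lambda>x. \<lambda>(p,k). x k p) -` Pi\<^sub>E (UNIV::('p \<times> 'k) set) A \<inter> space (PiM (UNIV::'k set) (\<lambda>k. PiM (UNIV::'p set) (\<lambda>_. g k))))"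
      by (rule emeasure_distr[OF regroup_meas])
    also have "(\<lambda>x. \<lambda>(p,k). x k p) -` Pi\<^sub>E (UNIV::('p \<times> 'k) set) A \<inter> space (PiM (UNIV::'k set) (\<lambda>k. PiM (UNIV::'p set) (\<lambda>_. g k)))
       = Pi\<^sub>E UNIV (\<lambda>k. Pi\<^sub>E UNIV (\<lambda>p. A (p,k)))"
    proof -
      have sub: "x \<in> A (p,k) \<Longrightarrow> x \<in> space (g k)" for x p k using Ak[THEN sets.sets_into_space] by auto
      show ?thesis
        apply (auto simp: space_PiM PiE_iff split: prod.split)
        subgoal for x k p by (rule sub[of _ p k]) simp
        done
    qed
    also have "emeasure (PiM (UNIV::'k set) (\<lambda>k. PiM (UNIV::'p set) (\<lambda>_. g k))) \<dots>
       = (\<Prod>k\<in>UNIV. emeasure (PiM (UNIV::'p set) (\<lambda>_. g k)) (Pi\<^sub>E UNIV (\<lambda>p. A (p,k))))"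
      using Ak by (intro KK.emeasure_PiM) (auto intro!: sets_PiM_I_finite)
    also have "\<dots> = (\<Prod>k\<in>UNIV. \<Prod>p\<in>UNIV. emeasure (g k) (A (p,k)))"
    proof (intro prod.cong refl)
      fix k
      interpret PP: product_prob_space "\<lambda>_::'p. g k" "UNIV :: 'p set" by (rule pps) (simp add: G)
      show "emeasure (PiM (UNIV::'p set) (\<lambda>_. g k)) (Pi\<^sub>E UNIV (\<lambda>p. A (p,k))) = (\<Prod>p\<in>UNIV. emeasure (g k) (A (p,k)))"
        using Ak by (intro PP.emeasure_PiM) auto
    qed
    also have "\<dots> = (\<Prod>p\<in>UNIV. \<Prod>k\<in>UNIV. emeasure (g k) (A (p,k)))" by (rule prod.swap)
    also have "\<dots> = (\<Prod>i\<in>UNIV. emeasure (case i of (p, k) \<Rightarrow> g k) (A i))"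
    proof -
      have "(\<Prod>p\<in>UNIV. \<Prod>k\<in>UNIV. emeasure (g k) (A (p,k))) = (\<Prod>(p,k)\<in>(UNIV::'p set) \<times> (UNIV::'k set). emeasure (g k) (A (p,k)))"
        by (rule prod.cartesian_product)
      also have "\<dots> = (\<Prod>i\<in>UNIV. emeasure (case i of (p, k) \<Rightarrow> g k) (A i))"
        unfolding UNIV_Times_UNIV by (intro prod.cong refl) (auto split: prod.split)
      finally show ?thesis .
    qed
    finally show "emeasure (distr (PiM (UNIV::'k set) (\<lambda>k. PiM (UNIV::'p set) (\<lambda>_. g k))) (PiM (UNIV::('p \<times> 'k) set) (\<lambda>(p,k). g k)) (\<lambda>x. \<lambda>(p,k). x k p)) (Pi\<^sub>E (UNIV::('p \<times> 'k) set) A)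
       = (\<Prod>i\<in>UNIV. emeasure (case i of (p, k) \<Rightarrow> g k) (A i))" .
  qed
qed


lemma indicator_PiE_prod:
  assumes "finite I" "x \<in> extensional I"
  shows "indicator (Pi\<^sub>E I A) x = (\<Prod>i\<in>I. indicator (A i) (x i) :: ennreal)"
proof (cases "x \<in> Pi\<^sub>E I A")
  case True thus ?thesis by (auto simp: PiE_iff intro!: prod.neutral)
next
  case False
  then obtain i where i: "i \<in> I" "x i \<notin> A i" using assms(2) by (auto simp: PiE_iff)
  have "(\<Prod>i\<in>I. indicator (A i) (x i) :: ennreal) = 0"
    by (rule prod_zero[OF assms(1)]) (use i in \<open>auto intro!: bexI[of _ i]\<close>)
  thus ?thesis using False by simp
qed

lemma PiM_density:
  assumes fin: "finite I" and M: "\<And>i. prob_space (M i)" and r[measurable]: "\<And>i. r i \<in> borel_measurable (M i)"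
    and D: "\<And>i. prob_space (density (M i) (r i))"
  shows "PiM I (\<lambda>i. density (M i) (r i)) = density (PiM I M) (\<lambda>x. \<Prod>i\<in>I. r i (x i))"
proof -
  interpret MM: product_prob_space M I by (rule pps[OF M])
  interpret DD: product_prob_space "\<lambda>i. density (M i) (r i)" I by (rule pps[OF D])
  have Rm: "(\<lambda>x. \<Prod>i\<in>I. r i (x i)) \<in> borel_measurable (PiM I M)"
  proof (intro borel_measurable_prod_ennreal)
    fix i assume "i \<in> I"
    thus "(\<lambda>x. r i (x i)) \<in> borel_measurable (PiM I M)"
      by (intro measurable_compose[OF measurable_component_singleton[of i I M] r[of i]])
  qed
  show ?thesis
  proof (rule DD.PiM_eqI[OF fin, symmetric])
    show "sets (density (PiM I M) (\<lambda>x. \<Prod>i\<in>I. r i (x i))) = sets (PiM I (\<lambda>i. density (M i) (r i)))"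
      by (simp add: sets_PiM_cong[OF refl sets_density])
    fix A assume A: "\<And>i. i \<in> I \<Longrightarrow> A i \<in> sets (density (M i) (r i))"
    hence AM: "\<And>i. i \<in> I \<Longrightarrow> A i \<in> sets (M i)" by simp
    have PA: "Pi\<^sub>E I A \<in> sets (PiM I M)" using AM fin by (intro sets_PiM_I_finite) auto
    have "emeasure (density (PiM I M) (\<lambda>x. \<Prod>i\<in>I. r i (x i))) (Pi\<^sub>E I A)
        = (\<integral>\<^sup>+ x. (\<Prod>i\<in>I. r i (x i)) * indicator (Pi\<^sub>E I A) x \<partial>PiM I M)"
      by (rule emeasure_density[OF Rm PA])
    also have "\<dots> = (\<integral>\<^sup>+ x. (\<Prod>i\<in>I. r i (x i) * indicator (A i) (x i)) \<partial>PiM I M)"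
    proof (intro nn_integral_cong)
      fix x assume "x \<in> space (PiM I M)"
      hence "x \<in> extensional I" by (auto simp: space_PiM PiE_def)
      thus "(\<Prod>i\<in>I. r i (x i)) * indicator (Pi\<^sub>E I A) x = (\<Prod>i\<in>I. r i (x i) * indicator (A i) (x i))"
        using fin by (simp add: indicator_PiE_prod prod.distrib)
    qed
    also have "\<dots> = (\<Prod>i\<in>I. \<integral>\<^sup>+ y. r i y * indicator (A i) y \<partial>M i)"
      using AM by (intro MM.product_nn_integral_prod[OF fin]) auto
    also have "\<dots> = (\<Prod>i\<in>I. emeasure (density (M i) (r i)) (A i))"
      using AM by (intro prod.cong refl) (simp add: emeasure_density)
    finally show "emeasure (density (PiM I M) (\<lambda>x. \<Prod>i\<in>I. r i (x i))) (Pi\<^sub>E I A) = (\<Prod>i\<in>I. emeasure (density (M i) (r i)) (A i))" .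
  qed
qed


lemma dist_prob: "is_dist M \<Longrightarrow> prob_space M" and dist_sets: "is_dist M \<Longrightarrow> sets M = sets borel"
  by (auto simp: is_dist_def)

lemma meas_psi:
  assumes "sets g = sets borel"
  shows "(\<lambda>f. \<chi> p. f p) \<in> measurable (PiM (UNIV::'p::finite set) (\<lambda>_. g)) (borel :: (real^'p) measure)"
  by (rule meas_PiM_cont) (auto simp: assms intro!: continuous_intros)

lemma meas_chi2:
  assumes "\<And>k. sets (gs k) = sets borel"
  shows "(\<lambda>f. \<chi> p k. f (p, k)) \<in> measurable (PiM (UNIV::('p::finite \<times> 'k::finite) set) (\<lambda>(p,k). gs k)) (borel :: (real^'k^'p) measure)"
  by (rule meas_PiM_cont) (auto simp: assms split: prod.split intro!: continuous_intros)

lemma meas_phi: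
  assumes "\<And>k. sets (qs k) = sets borel"
  shows "(\<lambda>f. \<chi> p k. f k $ p) \<in> measurable (PiM (UNIV::'k::finite set) qs) (borel :: (real^'k^'p::finite) measure)"
  by (rule meas_PiM_cont) (auto simp: assms intro!: continuous_intros)

lemma is_dist_prior_vec:
  assumes "is_dist g"
  shows "is_dist (prior_vec g :: (real^'p::finite) measure)"
proof -
  have "prob_space (PiM (UNIV::'p set) (\<lambda>_. g))" using assms by (intro prob_space_PiM) (simp add: dist_prob)
  hence "prob_space (prior_vec g :: (real^'p) measure)"
    unfolding prior_vec_def by (rule prob_space.prob_space_distr) (rule meas_psi[OF dist_sets[OF assms]])
  thus ?thesis by (simp add: is_dist_def prior_vec_def)
qed

lemma is_dist_prod_cols:
  assumes "\<And>k. is_dist (qs k)"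
  shows "is_dist (prod_cols qs :: (real^'k::finite^'p::finite) measure)"
proof -
  have "prob_space (PiM (UNIV::'k set) qs)" using assms by (intro prob_space_PiM) (simp add: dist_prob)
  hence "prob_space (prod_cols qs :: (real^'k^'p) measure)"
    unfolding prod_cols_def by (rule prob_space.prob_space_distr) (rule meas_phi, simp add: dist_sets[OF assms])
  thus ?thesis by (simp add: is_dist_def prod_cols_def)
qed

lemma is_dist_prior_mat:
  assumes "\<And>k. is_dist (gs k)"
  shows "is_dist (prior_mat gs :: (real^'k::finite^'p::finite) measure)"
proof -
  have "prob_space (PiM (UNIV::('p \<times> 'k) set) (\<lambda>(p,k). gs k))" using assms
    by (intro prob_space_PiM) (auto simp: dist_prob split: prod.split)
  hence "prob_space (prior_mat gs :: (real^'k^'p) measure)"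
    unfolding prior_mat_def by (rule prob_space.prob_space_distr) (rule meas_chi2, simp add: dist_sets[OF assms])
  thus ?thesis by (simp add: is_dist_def prior_mat_def)
qed

lemma prior_mat_cols:
  assumes G: "\<And>k. is_dist (gs k)"
  shows "(prior_mat gs :: (real^'k::finite^'p::finite) measure) = prod_cols (\<lambda>k. prior_vec (gs k))"
proof -
  let ?K = "PiM (UNIV::'k set) (\<lambda>k. PiM (UNIV::'p set) (\<lambda>_. gs k))"
  have Gp: "\<And>k. prob_space (gs k)" and Gs: "\<And>k. sets (gs k) = sets borel" using G by (auto simp: is_dist_def)
  have "prior_mat gs = distr (distr ?K (PiM (UNIV::('p \<times> 'k) set) (\<lambda>(p,k). gs k)) (\<lambda>x. \<lambda>(p,k). x k p)) borel (\<lambda>f. \<chi> p k. f (p, k))"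
    unfolding prior_mat_def by (subst regroup[OF Gp]) simp
  also have "\<dots> = distr ?K borel ((\<lambda>f. \<chi> p k. f (p, k)) \<circ> (\<lambda>x. \<lambda>(p,k). x k p))"
    by (intro distr_distr meas_chi2 Gs regroup_meas)
  also have "\<dots> = distr ?K borel ((\<lambda>f. \<chi> p k. f k $ p) \<circ> (\<lambda>x. \<lambda>k\<in>UNIV. (\<lambda>f. \<chi> p. f p) (x k)))"
    by (intro distr_cong refl) (simp add: o_def)
  also have "\<dots> = distr (distr ?K (PiM (UNIV::'k set) (\<lambda>_. borel)) (\<lambda>x. \<lambda>k\<in>UNIV. (\<lambda>f. \<chi> p. f p) (x k))) borel (\<lambda>f. \<chi> p k. f k $ p)"
  proof (intro distr_distr[symmetric] meas_phi)
    show "(\<lambda>x. \<lambda>k\<in>UNIV. (\<lambda>f. \<chi> p. f p) (x k)) \<in> measurable ?K (PiM (UNIV::'k set) (\<lambda>_. borel))"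
    proof (rule measurable_restrict)
      fix k :: 'k
      show "(\<lambda>x. (\<lambda>f. \<chi> p. f p) (x k)) \<in> measurable ?K (borel :: (real^'p) measure)"
        by (rule measurable_compose[OF measurable_component_singleton[of k UNIV "\<lambda>k. PiM (UNIV::'p set) (\<lambda>_. gs k)"] meas_psi[OF Gs[of k]]]) simp
    qed
  qed simp
  also have "distr ?K (PiM (UNIV::'k set) (\<lambda>_. borel)) (\<lambda>x. \<lambda>k\<in>UNIV. (\<lambda>f. \<chi> p. f p) (x k)) = PiM UNIV (\<lambda>k. prior_vec (gs k))"
    unfolding prior_vec_def
    by (rule PiM_distr[symmetric]) (auto intro: prob_space_PiM Gp simp: meas_psi[OF Gs])
  finally show ?thesis by (simp add: prod_cols_def)
qed


lemma column_phi: "column k (\<chi> p k. f k $ p) = f k"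
  by (simp add: column_def vec_eq_iff)

lemma meas_column: "(\<lambda>L. column k L) \<in> borel_measurable (borel :: (real^'k::finite^'p::finite) measure)"
  unfolding column_def by (intro borel_measurable_continuous_onI continuous_intros)

lemma PiM_comp:
  fixes qs :: "'k::finite \<Rightarrow> 'a measure" and h :: "'a \<Rightarrow> real"
  assumes Q: "\<And>k. prob_space (qs k)" and H: "integrable (qs k) h"
  shows "integrable (PiM UNIV qs) (\<lambda>x. h (x k))" "(\<integral>x. h (x k) \<partial>PiM UNIV qs) = integral\<^sup>L (qs k) h"
proof -
  interpret QQ: product_prob_space qs UNIV by (rule pps[OF Q])
  have e: "distr (PiM UNIV qs) (qs k) (\<lambda>\<omega>. \<omega> k) = qs k" by (rule QQ.PiM_component) simp
  have hm: "h \<in> borel_measurable (qs k)" using H by simp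
  have "integrable (distr (PiM UNIV qs) (qs k) (\<lambda>\<omega>. \<omega> k)) h" using H e by simp
  thus "integrable (PiM UNIV qs) (\<lambda>x. h (x k))"
    by (subst (asm) integrable_distr_eq[OF measurable_component_singleton[of k UNIV qs, OF UNIV_I] hm]) auto
  have "integral\<^sup>L (qs k) h = integral\<^sup>L (distr (PiM UNIV qs) (qs k) (\<lambda>\<omega>. \<omega> k)) h" using e by simp
  also have "\<dots> = (\<integral>x. h (x k) \<partial>PiM UNIV qs)" by (rule integral_distr[OF measurable_component_singleton[of k UNIV qs, OF UNIV_I] hm])
  finally show "(\<integral>x. h (x k) \<partial>PiM UNIV qs) = integral\<^sup>L (qs k) h" by simp
qed

lemma prod_cols_sum:
  fixes qs :: "'k::finite \<Rightarrow> (real^'p::finite) measure" and h :: "'k \<Rightarrow> real^'p \<Rightarrow> real"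
  assumes Q: "\<And>k. is_dist (qs k)" and H: "\<And>k. integrable (qs k) (h k)"
  shows "integrable (prod_cols qs) (\<lambda>L. \<Sum>k\<in>UNIV. h k (column k L))"
    "integral\<^sup>L (prod_cols qs) (\<lambda>L. \<Sum>k\<in>UNIV. h k (column k L)) = (\<Sum>k\<in>UNIV. integral\<^sup>L (qs k) (h k))"
proof -
  have Qp: "\<And>k. prob_space (qs k)" and Qs: "\<And>k. sets (qs k) = sets borel" using Q by (auto simp: is_dist_def)
  have phim: "(\<lambda>f. \<chi> p k. f k $ p) \<in> measurable (PiM (UNIV::'k set) qs) (borel :: (real^'k^'p) measure)"
    by (rule meas_phi[OF Qs])
  have hm: "h k \<in> borel_measurable borel" for k
    using H[of k] measurable_cong_sets[OF Qs[of k] refl] by auto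
  have Fm: "(\<lambda>L. \<Sum>k\<in>UNIV. h k (column k L)) \<in> borel_measurable (borel :: (real^'k^'p) measure)"
    by (intro borel_measurable_sum measurable_compose[OF meas_column hm])
  have comp: "(\<lambda>x. \<Sum>k\<in>UNIV. h k (column k ((\<lambda>f. \<chi> p k. f k $ p) x))) = (\<lambda>x. \<Sum>k\<in>UNIV. h k (x k))"
    by (simp add: column_phi)
  have iP: "integrable (PiM UNIV qs) (\<lambda>x. \<Sum>k\<in>UNIV. h k (x k))"
    by (rule Bochner_Integration.integrable_sum) (rule PiM_comp(1)[OF Qp H])
  show "integrable (prod_cols qs) (\<lambda>L. \<Sum>k\<in>UNIV. h k (column k L))"
    unfolding prod_cols_def integrable_distr_eq[OF phim Fm] comp by (rule iP)
  have "integral\<^sup>L (prod_cols qs) (\<lambda>L. \<Sum>k\<in>UNIV. h k (column k L)) = (\<integral>x. (\<Sum>k\<in>UNIV. h k (x k)) \<partial>PiM UNIV qs)"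
    unfolding prod_cols_def integral_distr[OF phim Fm] comp ..
  also have "\<dots> = (\<Sum>k\<in>UNIV. (\<integral>x. h k (x k) \<partial>PiM UNIV qs))"
    by (rule Bochner_Integration.integral_sum) (rule PiM_comp(1)[OF Qp H])
  also have "\<dots> = (\<Sum>k\<in>UNIV. integral\<^sup>L (qs k) (h k))"
    by (rule sum.cong, rule refl, rule PiM_comp(2)[OF Qp H])
  finally show "integral\<^sup>L (prod_cols qs) (\<lambda>L. \<Sum>k\<in>UNIV. h k (column k L)) = (\<Sum>k\<in>UNIV. integral\<^sup>L (qs k) (h k))" .
qed

lemma prod_cols_density:
  fixes P :: "'k::finite \<Rightarrow> (real^'p::finite) measure"
  assumes Pd: "\<And>k. is_dist (P k)" and r: "\<And>k. r k \<in> borel_measurable (P k)"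
    and D: "\<And>k. prob_space (density (P k) (r k))"
  shows "prod_cols (\<lambda>k. density (P k) (r k)) = density (prod_cols P) (\<lambda>L. \<Prod>k\<in>UNIV. r k (column k L))"
proof -
  have Pp: "\<And>k. prob_space (P k)" and Ps: "\<And>k. sets (P k) = sets borel" using Pd by (auto simp: is_dist_def)
  have phim: "(\<lambda>f. \<chi> p k. f k $ p) \<in> measurable (PiM (UNIV::'k set) P) (borel :: (real^'k^'p) measure)"
    by (rule meas_phi[OF Ps])
  have rm: "r k \<in> borel_measurable borel" for k using r[of k] measurable_cong_sets[OF Ps[of k] refl] by auto
  have Rm: "(\<lambda>L. \<Prod>k\<in>UNIV. r k (column k L)) \<in> borel_measurable (borel :: (real^'k^'p) measure)"
    by (intro borel_measurable_prod_ennreal measurable_compose[OF meas_column rm])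
  have "prod_cols (\<lambda>k. density (P k) (r k)) = distr (density (PiM UNIV P) (\<lambda>x. \<Prod>k\<in>UNIV. r k (x k))) borel (\<lambda>f. \<chi> p k. f k $ p)"
    unfolding prod_cols_def by (subst PiM_density[OF finite_class.finite_UNIV Pp r D]) (simp add: sets_PiM_cong)
  also have "\<dots> = density (distr (PiM UNIV P) borel (\<lambda>f. \<chi> p k. f k $ p)) (\<lambda>L. \<Prod>k\<in>UNIV. r k (column k L))"
    by (subst density_distr[OF Rm phim]) (simp add: column_phi)
  finally show ?thesis by (simp add: prod_cols_def)
qed


lemma enn2real_prod: "enn2real (\<Prod>i\<in>I. f i) = (\<Prod>i\<in>I. enn2real (f i))"
  by (induction I rule: infinite_finite_induct) (auto simp: enn2real_mult)

definition yv :: "real^'p^'n \<Rightarrow> real^'k^'n \<Rightarrow> 'k \<Rightarrow> real^'p" where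
  "yv X Z k = transpose X *v column k Z"

definition fk :: "real^'p::finite^'n::finite \<Rightarrow> real^'k::finite^'n \<Rightarrow> real \<Rightarrow> 'k \<Rightarrow> real^'p \<Rightarrow> real" where
  "fk X Z \<tau> k \<eta> = ln (\<Prod>p\<in>UNIV. normal_density (\<eta> $ p) (sqrt (1 / \<tau>)) (yv X Z k $ p))"

lemma yv_nth: "yv X Z k $ p = (\<Sum>n\<in>UNIV. X$n$p * Z$n$k)"
  by (simp add: yv_def matrix_vector_mult_def transpose_def column_def mult_ac)

lemma ebnm_fk: "ebnm_obj (yv X Z k) (1/\<tau>) g q = ext_exp q (fk X Z \<tau> k) - KL q (prior_vec g)"
  by (simp add: ebnm_obj_def fk_def[abs_def])

lemma fk_eq:
  fixes X :: "real^'p::finite^'n::finite" and Z :: "real^'k::finite^'n" and \<eta> :: "real^'p"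
  assumes t: "\<tau> > 0"
  shows "fk X Z \<tau> k \<eta> = - real CARD('p) * ln (2*pi/\<tau>) / 2 - \<tau> / 2 * (\<Sum>p\<in>UNIV. (yv X Z k $ p - \<eta> $ p)\<^sup>2)"
proof -
  have pos: "normal_density m (sqrt (1/\<tau>)) x > 0" for m x
    using t by (intro normal_density_pos) auto
  have "fk X Z \<tau> k \<eta> = (\<Sum>p\<in>UNIV. ln (normal_density (\<eta> $ p) (sqrt (1 / \<tau>)) (yv X Z k $ p)))"
    unfolding fk_def using pos by (subst ln_prod) (auto simp: pos[THEN less_imp_neq, symmetric])
  also have "\<dots> = (\<Sum>p\<in>(UNIV::'p set). - ln (2*pi/\<tau>) / 2 - \<tau> * (yv X Z k $ p - \<eta> $ p)\<^sup>2 / 2)"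
    using t by (simp add: ln_normal_density)
  also have "\<dots> = - real CARD('p) * ln (2*pi/\<tau>) / 2 - \<tau> / 2 * (\<Sum>p\<in>UNIV. (yv X Z k $ p - \<eta> $ p)\<^sup>2)"
    by (simp add: sum_subtractf sum_distrib_left sum_divide_distrib)
  finally show ?thesis .
qed

lemma fk_le:
  fixes X :: "real^'p::finite^'n::finite" and Z :: "real^'k::finite^'n" and \<eta> :: "real^'p"
  assumes t: "\<tau> > 0"
  shows "fk X Z \<tau> k \<eta> \<le> - real CARD('p) * ln (2*pi/\<tau>) / 2"
  unfolding fk_eq[OF t] using t by (auto intro!: sum_nonneg mult_nonneg_nonneg)

lemma fk_meas:
  fixes X :: "real^'p::finite^'n::finite" and Z :: "real^'k::finite^'n"
  assumes t: "\<tau> > 0"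
  shows "fk X Z \<tau> k \<in> borel_measurable borel"
proof -
  have "fk X Z \<tau> k = (\<lambda>\<eta>. - real CARD('p) * ln (2*pi/\<tau>) / 2 - \<tau> / 2 * (\<Sum>p\<in>UNIV. (yv X Z k $ p - \<eta> $ p)\<^sup>2))"
    by (rule ext) (rule fk_eq[OF t])
  also have "\<dots> \<in> borel_measurable borel" by (intro borel_measurable_continuous_onI continuous_intros)
  finally show ?thesis .
qed

lemma loglik_le:
  fixes X :: "real^'p::finite^'n::finite" and Z :: "real^'k::finite^'n"
  assumes t: "\<tau> > 0"
  shows "loglik X Z \<tau> L \<le> - real (CARD('n) * CARD('p)) * ln (2*pi/\<tau>) / 2"
  unfolding loglik_eq[OF t] sqres_def using t by (auto intro!: sum_nonneg mult_nonneg_nonneg)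

lemma loglik_meas:
  fixes X :: "real^'p::finite^'n::finite" and Z :: "real^'k::finite^'n"
  assumes t: "\<tau> > 0"
  shows "loglik X Z \<tau> \<in> borel_measurable borel"
proof -
  have "loglik X Z \<tau> = (\<lambda>L. - real (CARD('n) * CARD('p)) * ln (2*pi/\<tau>) / 2 - \<tau> / 2 * sqres X Z L)"
    using loglik_eq[OF t] by auto
  also have "\<dots> \<in> borel_measurable borel"
    unfolding sqres_def matrix_matrix_mult_def transpose_def by (intro borel_measurable_continuous_onI continuous_intros)
  finally show ?thesis .
qed

definition Cc :: "real^'p::finite^'n::finite \<Rightarrow> real^'k::finite^'n \<Rightarrow> real \<Rightarrow> real" where
  "Cc X Z \<tau> = - real (CARD('n) * CARD('p)) * ln (2*pi/\<tau>) / 2 + real (CARD('k) * CARD('p)) * ln (2*pi/\<tau>) / 2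
     - \<tau> / 2 * ((\<Sum>n\<in>UNIV. \<Sum>p\<in>UNIV. (X$n$p)\<^sup>2) - (\<Sum>k\<in>UNIV. \<Sum>p\<in>UNIV. (yv X Z k $ p)\<^sup>2))"

lemma loglik_decomp:
  fixes X :: "real^'p::finite^'n::finite" and Z :: "real^'k::finite^'n" and L :: "real^'k^'p"
  assumes t: "\<tau> > 0" and Z: "Z \<in> stiefel"
  shows "loglik X Z \<tau> L = Cc X Z \<tau> + (\<Sum>k\<in>UNIV. fk X Z \<tau> k (column k L))"
proof -
  have cross: "(\<Sum>k\<in>UNIV. \<Sum>p\<in>UNIV. yv X Z k $ p * L$p$k) = (\<Sum>n\<in>UNIV. \<Sum>p\<in>UNIV. \<Sum>k\<in>UNIV. X$n$p * Z$n$k * L$p$k)"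
  proof -
    have "(\<Sum>k\<in>UNIV. \<Sum>p\<in>UNIV. yv X Z k $ p * L$p$k) = (\<Sum>k\<in>UNIV. \<Sum>p\<in>UNIV. \<Sum>n\<in>UNIV. X$n$p * Z$n$k * L$p$k)"
      by (simp add: yv_nth sum_distrib_right)
    also have "\<dots> = (\<Sum>p\<in>UNIV. \<Sum>k\<in>UNIV. \<Sum>n\<in>UNIV. X$n$p * Z$n$k * L$p$k)" by (rule sum.swap)
    also have "\<dots> = (\<Sum>p\<in>UNIV. \<Sum>n\<in>UNIV. \<Sum>k\<in>UNIV. X$n$p * Z$n$k * L$p$k)" by (intro sum.cong refl sum.swap)
    also have "\<dots> = (\<Sum>n\<in>UNIV. \<Sum>p\<in>UNIV. \<Sum>k\<in>UNIV. X$n$p * Z$n$k * L$p$k)" by (rule sum.swap)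
    finally show ?thesis .
  qed
  have sq: "(\<Sum>k\<in>UNIV. \<Sum>p\<in>UNIV. (yv X Z k $ p - column k L $ p)\<^sup>2)
      = (\<Sum>k\<in>UNIV. \<Sum>p\<in>UNIV. (yv X Z k $ p)\<^sup>2) - 2 * (\<Sum>k\<in>UNIV. \<Sum>p\<in>UNIV. yv X Z k $ p * L$p$k) + (\<Sum>p\<in>UNIV. \<Sum>k\<in>UNIV. (L$p$k)\<^sup>2)"
  proof -
    have "(\<Sum>k\<in>UNIV. \<Sum>p\<in>UNIV. (yv X Z k $ p - column k L $ p)\<^sup>2)
       = (\<Sum>k\<in>UNIV. \<Sum>p\<in>UNIV. (yv X Z k $ p)\<^sup>2 - 2 * (yv X Z k $ p * L$p$k) + (L$p$k)\<^sup>2)"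
      by (intro sum.cong refl) (simp add: column_def power2_diff mult_ac)
    also have "\<dots> = (\<Sum>k\<in>UNIV. \<Sum>p\<in>UNIV. (yv X Z k $ p)\<^sup>2) - 2 * (\<Sum>k\<in>UNIV. \<Sum>p\<in>UNIV. yv X Z k $ p * L$p$k) + (\<Sum>k\<in>UNIV. \<Sum>p\<in>UNIV. (L$p$k)\<^sup>2)"
      by (simp add: sum.distrib sum_subtractf sum_distrib_left)
    also have "(\<Sum>k\<in>UNIV. \<Sum>p\<in>UNIV. (L$p$k)\<^sup>2) = (\<Sum>p\<in>UNIV. \<Sum>k\<in>UNIV. (L$p$k)\<^sup>2)" by (rule sum.swap)
    finally show ?thesis .
  qed
  have "(\<Sum>k\<in>UNIV. fk X Z \<tau> k (column k L)) = - real (CARD('k) * CARD('p)) * ln (2*pi/\<tau>) / 2 - \<tau> / 2 * (\<Sum>k\<in>UNIV. \<Sum>p\<in>UNIV. (yv X Z k $ p - column k L $ p)\<^sup>2)"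
    unfolding fk_eq[OF t] by (simp add: sum_subtractf sum_distrib_left)
  thus ?thesis
    unfolding loglik_eq[OF t] sqres_stiefel[OF Z] sq cross Cc_def by (simp add: algebra_simps)
qed


lemma finite_parts:
  fixes f :: "'a \<Rightarrow> real"
  assumes P: "prob_space P" and Q: "prob_space Q" and S: "sets Q = sets P"
    and fm: "f \<in> borel_measurable P" and B: "\<And>x. f x \<le> B"
    and fin: "ext_exp Q f - KL Q P = ereal e"
  shows "integrable Q f" "absolutely_continuous P Q"
    "integrable Q (\<lambda>x. ln (enn2real (RN_deriv P Q x)))"
    "e = integral\<^sup>L Q f - (\<integral>x. ln (enn2real (RN_deriv P Q x)) \<partial>Q)"
proof -
  have Qm: "f \<in> borel_measurable Q" using fm by (simp add: measurable_cong_sets[OF S refl])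
  have lt: "ext_exp Q f < \<infinity>" by (rule ext_exp_lt_top[OF Q B])
  have Kn: "KL Q P \<noteq> -\<infinity>" by (rule KL_not_minf[OF P Q S])
  have fn: "ext_exp Q f \<noteq> -\<infinity>"
  proof
    assume "ext_exp Q f = -\<infinity>" thus False using fin Kn by (simp add: ereal_minf_minus)
  qed
  have kn: "KL Q P \<noteq> \<infinity>"
  proof
    assume "KL Q P = \<infinity>" thus False using fin lt by (simp add: ereal_minus_inf)
  qed
  show AC: "absolutely_continuous P Q" using kn by (auto simp: KL_def split: if_splits)
  show iF: "integrable Q f" using lt fn by (intro ext_exp_integrable_iff[OF Qm]) auto
  have gm: "(\<lambda>x. ln (enn2real (RN_deriv P Q x))) \<in> borel_measurable Q"
    unfolding measurable_cong_sets[OF S refl] by measurable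
  have KLe: "KL Q P = ext_exp Q (\<lambda>x. ln (enn2real (RN_deriv P Q x)))" using AC by (simp add: KL_def)
  show iG: "integrable Q (\<lambda>x. ln (enn2real (RN_deriv P Q x)))"
    using kn Kn unfolding KLe by (intro ext_exp_integrable_iff[OF gm]) auto
  show "e = integral\<^sup>L Q f - (\<integral>x. ln (enn2real (RN_deriv P Q x)) \<partial>Q)"
    using fin unfolding KLe ext_exp_integrable[OF iF] ext_exp_integrable[OF iG] by simp
qed

lemma RN_pos:
  assumes P: "prob_space P" and Q: "prob_space Q" and S: "sets Q = sets P" and AC: "absolutely_continuous P Q"
  shows "AE x in Q. 0 < enn2real (RN_deriv P Q x)"
proof -
  interpret P: prob_space P by (rule P)
  interpret Q: prob_space Q by (rule Q)
  define r where "r = RN_deriv P Q"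
  have Qd: "density P r = Q" unfolding r_def by (rule P.density_RN_deriv[OF AC S])
  have rm[measurable]: "r \<in> borel_measurable P" unfolding r_def by simp
  have A1: "AE x in Q. r x \<noteq> \<infinity>"
    using absolutely_continuous_AE[OF S AC P.RN_deriv_finite[OF Q.sigma_finite_measure_axioms AC S]]
    by (simp add: r_def)
  have "AE x in density P r. r x \<noteq> 0" by (subst AE_density[OF rm]) auto
  hence A2: "AE x in Q. r x \<noteq> 0" unfolding Qd .
  show ?thesis using A1 A2 unfolding r_def
    by eventually_elim (auto simp: enn2real_positive_iff top.not_eq_extremum zero_less_iff_neq_zero)
qed

lemma prod_cols_prod:
  fixes qs :: "'k::finite \<Rightarrow> (real^'p::finite) measure" and h :: "'k \<Rightarrow> real^'p \<Rightarrow> real"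
  assumes Q: "\<And>k. is_dist (qs k)" and H: "\<And>k. integrable (qs k) (h k)"
  shows "integral\<^sup>L (prod_cols qs) (\<lambda>L. \<Prod>k\<in>UNIV. h k (column k L)) = (\<Prod>k\<in>UNIV. integral\<^sup>L (qs k) (h k))"
proof -
  have Qp: "\<And>k. prob_space (qs k)" and Qs: "\<And>k. sets (qs k) = sets borel" using Q by (auto simp: is_dist_def)
  interpret QQ: product_prob_space qs UNIV by (rule pps[OF Qp])
  have phim: "(\<lambda>f. \<chi> p k. f k $ p) \<in> measurable (PiM (UNIV::'k set) qs) (borel :: (real^'k^'p) measure)"
    by (rule meas_phi[OF Qs])
  have hm: "h k \<in> borel_measurable borel" for k
    using H[of k] measurable_cong_sets[OF Qs[of k] refl] by auto
  have Fm: "(\<lambda>L. \<Prod>k\<in>UNIV. h k (column k L)) \<in> borel_measurable (borel :: (real^'k^'p) measure)"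
    by (intro borel_measurable_prod measurable_compose[OF meas_column hm])
  have "integral\<^sup>L (prod_cols qs) (\<lambda>L. \<Prod>k\<in>UNIV. h k (column k L)) = (\<integral>x. (\<Prod>k\<in>UNIV. h k (x k)) \<partial>PiM UNIV qs)"
    unfolding prod_cols_def integral_distr[OF phim Fm] by (simp add: column_phi)
  also have "\<dots> = (\<Prod>k\<in>UNIV. integral\<^sup>L (qs k) (h k))"
    by (rule QQ.product_integral_prod) (auto simp: H)
  finally show ?thesis .
qed


lemma KL_prod:
  fixes Pv qs :: "'k::finite \<Rightarrow> (real^'p::finite) measure"
  assumes Pd: "\<And>k. is_dist (Pv k)" and Qd: "\<And>k. is_dist (qs k)"
    and AC: "\<And>k. absolutely_continuous (Pv k) (qs k)"
    and iL: "\<And>k. integrable (qs k) (\<lambda>x. ln (enn2real (RN_deriv (Pv k) (qs k) x)))"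
  shows "KL (prod_cols qs) (prod_cols Pv) = ereal (\<Sum>k\<in>UNIV. \<integral>x. ln (enn2real (RN_deriv (Pv k) (qs k) x)) \<partial>qs k)"
proof -
  define r where "r k = RN_deriv (Pv k) (qs k)" for k
  have Pp: "\<And>k. prob_space (Pv k)" and Ps: "\<And>k. sets (Pv k) = sets borel" using Pd by (auto simp: is_dist_def)
  have Qp: "\<And>k. prob_space (qs k)" and Qs: "\<And>k. sets (qs k) = sets borel" using Qd by (auto simp: is_dist_def)
  have S: "sets (qs k) = sets (Pv k)" for k using Ps Qs by simp
  have dens: "density (Pv k) (r k) = qs k" for k
    unfolding r_def by (rule sigma_finite_measure.density_RN_deriv[OF prob_space_imp_sigma_finite[OF Pp] AC S])
  have rm: "r k \<in> borel_measurable (Pv k)" for k unfolding r_def by simp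
  have Qeq: "prod_cols qs = density (prod_cols Pv) (\<lambda>L. \<Prod>k\<in>UNIV. r k (column k L))"
    using prod_cols_density[OF Pd rm] dens Qp by simp
  have PCd: "is_dist (prod_cols Pv :: (real^'k^'p) measure)" by (rule is_dist_prod_cols[OF Pd])
  have PCs: "sets (prod_cols Pv :: (real^'k^'p) measure) = sets borel" using PCd by (simp add: is_dist_def)
  interpret PC: prob_space "prod_cols Pv :: (real^'k^'p) measure" using PCd by (simp add: is_dist_def)
  have rmb: "r k \<in> borel_measurable borel" for k using rm[of k] measurable_cong_sets[OF Ps[of k] refl] by auto
  have Rm: "(\<lambda>L. \<Prod>k\<in>UNIV. r k (column k L)) \<in> borel_measurable (prod_cols Pv :: (real^'k^'p) measure)"
    unfolding measurable_cong_sets[OF PCs refl]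
    by (intro borel_measurable_prod_ennreal measurable_compose[OF meas_column rmb])
  have QCd: "is_dist (prod_cols qs :: (real^'k^'p) measure)" by (rule is_dist_prod_cols[OF Qd])
  have SS: "sets (prod_cols qs :: (real^'k^'p) measure) = sets (prod_cols Pv)" using PCs QCd by (simp add: is_dist_def)
  have AC': "absolutely_continuous (prod_cols Pv) (prod_cols qs :: (real^'k^'p) measure)"
    unfolding Qeq by (rule absolutely_continuousI_density[OF Rm])
  have RNe: "AE x in prod_cols Pv. (\<Prod>k\<in>UNIV. r k (column k x)) = RN_deriv (prod_cols Pv) (prod_cols qs) x"
    by (rule PC.RN_deriv_unique[OF Rm Qeq[symmetric]])
  have RNe': "AE x in prod_cols qs. (\<Prod>k\<in>UNIV. r k (column k x)) = RN_deriv (prod_cols Pv) (prod_cols qs) x"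
    by (rule absolutely_continuous_AE[OF SS AC' RNe])
  have POS: "AE x in prod_cols qs. \<forall>k\<in>UNIV. 0 < enn2real (r k (column k x))"
  proof -
    interpret QQ: product_prob_space qs UNIV by (rule pps[OF Qp])
    have phim: "(\<lambda>f. \<chi> p k. f k $ p) \<in> measurable (PiM (UNIV::'k set) qs) (borel :: (real^'k^'p) measure)"
      by (rule meas_phi[OF Qs])
    have AEP: "AE \<omega> in PiM UNIV qs. \<forall>k\<in>UNIV. 0 < enn2real (r k (\<omega> k))"
    proof (rule AE_finite_allI[OF finite_class.finite_UNIV])
      fix k :: 'k
      have "AE x in qs k. 0 < enn2real (r k x)" unfolding r_def by (rule RN_pos[OF Pp Qp S AC])
      thus "AE \<omega> in PiM UNIV qs. 0 < enn2real (r k (\<omega> k))" by (rule QQ.AE_component[OF UNIV_I])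
    qed
    have rc[measurable]: "(\<lambda>x. r k (column k x)) \<in> borel_measurable (borel :: (real^'k^'p) measure)" for k
      by (rule measurable_compose[OF meas_column rmb])
    have "{x \<in> space borel. \<forall>k\<in>UNIV. 0 < enn2real (r k (column k x))} \<in> sets (borel :: (real^'k^'p) measure)"
      by measurable
    with AEP show ?thesis unfolding prod_cols_def
      by (subst AE_distr_iff[OF phim]) (auto simp: column_phi)
  qed
  have "KL (prod_cols qs) (prod_cols Pv) = ext_exp (prod_cols qs) (\<lambda>x. ln (enn2real (RN_deriv (prod_cols Pv) (prod_cols qs) x)))"
    using AC' by (simp add: KL_def)
  also have "\<dots> = ext_exp (prod_cols qs) (\<lambda>x. \<Sum>k\<in>UNIV. ln (enn2real (r k (column k x))))"
  proof (rule ext_exp_cong_AE)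
    show "AE x in prod_cols qs. ln (enn2real (RN_deriv (prod_cols Pv) (prod_cols qs) x)) = (\<Sum>k\<in>UNIV. ln (enn2real (r k (column k x))))"
      using RNe' POS
    proof eventually_elim
      case (elim x)
      hence "ln (enn2real (RN_deriv (prod_cols Pv) (prod_cols qs) x)) = ln (\<Prod>k\<in>UNIV. enn2real (r k (column k x)))"
        by (metis enn2real_prod)
      also have "\<dots> = (\<Sum>k\<in>UNIV. ln (enn2real (r k (column k x))))"
        using elim by (subst ln_prod) (auto, metis less_irrefl)
      finally show ?case .
    qed
  qed
  also have "\<dots> = ereal (\<Sum>k\<in>UNIV. \<integral>x. ln (enn2real (r k x)) \<partial>qs k)"
    using prod_cols_sum[OF Qd, where h = "\<lambda>k x. ln (enn2real (r k x))"] iL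
    by (subst ext_exp_integrable) (auto simp: r_def)
  finally show ?thesis by (simp add: r_def)
qed


lemma sq_bound: "(v::real)\<^sup>2 \<le> 2 * (y - v)\<^sup>2 + 2 * y\<^sup>2"
proof -
  have "0 \<le> (2*y - v)\<^sup>2" by simp
  thus ?thesis by (simp add: power2_eq_square algebra_simps)
qed

context
  fixes X :: "real^'p::finite^'n::finite" and Z :: "real^'k::finite^'n" and \<tau> :: real and G :: "real measure set"
  assumes G_dists: "\<forall>g\<in>G. is_dist g" and Z: "Z \<in> stiefel" and t: "\<tau> > 0"
begin

definition Mk :: "'k \<Rightarrow> real measure \<Rightarrow> real" where
  "Mk k g = (\<integral>\<eta>. exp (fk X Z \<tau> k \<eta>) \<partial>(prior_vec g :: (real^'p) measure))"

lemma Pv_dist: "g \<in> G \<Longrightarrow> is_dist (prior_vec g :: (real^'p) measure)"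
  using G_dists by (intro is_dist_prior_vec) auto

lemma fk_measP:
  assumes "is_dist P"
  shows "fk X Z \<tau> k \<in> borel_measurable P"
proof -
  have "sets P = sets borel" using assms by (simp add: is_dist_def)
  show ?thesis unfolding measurable_cong_sets[OF \<open>sets P = sets borel\<close> refl] by (rule fk_meas[OF t])
qed

lemma ebnm_upper:
  assumes g: "g \<in> G" and q: "is_dist q"
  shows "ebnm_obj (yv X Z k) (1/\<tau>) g q \<le> ereal (ln (Mk k g))"
proof -
  have P: "prob_space (prior_vec g :: (real^'p) measure)" and Ps: "sets (prior_vec g :: (real^'p) measure) = sets borel"
    using Pv_dist[OF g] by (auto simp: is_dist_def)
  have Q: "prob_space q" and Qs: "sets q = sets borel" using q by (auto simp: is_dist_def)
  show ?thesis unfolding ebnm_fk Mk_def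
    by (rule gibbs[OF P Q _ fk_measP[OF Pv_dist[OF g]] fk_le[OF t]]) (simp add: Ps Qs)
qed

lemma ebnm_attain:
  assumes g: "g \<in> G"
  shows "\<exists>Q. is_dist Q \<and> ebnm_obj (yv X Z k) (1/\<tau>) g Q = ereal (ln (Mk k g))"
proof -
  let ?P = "prior_vec g :: (real^'p) measure"
  have P: "prob_space ?P" and Ps: "sets ?P = sets borel" using Pv_dist[OF g] by (auto simp: is_dist_def)
  note ga = gibbs_attain[OF P fk_measP[OF Pv_dist[OF g]] fk_le[OF t]]
  show ?thesis
    by (rule exI[of _ "density ?P (\<lambda>x. ennreal (exp (fk X Z \<tau> k x) / (\<integral>x. exp (fk X Z \<tau> k x) \<partial>?P)))"])
       (use ga Ps in \<open>auto simp: is_dist_def ebnm_fk Mk_def\<close>)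
qed

lemma Mk_pos: "g \<in> G \<Longrightarrow> Mk k g > 0"
  unfolding Mk_def using Pv_dist
  by (intro exp_integral_pos(2)[OF _ fk_measP fk_le[OF t]]) (auto simp: is_dist_def)

lemma part1_main:
  fixes gs :: "'k \<Rightarrow> real measure" and qs :: "'k \<Rightarrow> (real^'p) measure"
  assumes E: "\<And>k. is_EBNM (yv X Z k) (1 / \<tau>) G (gs k) (qs k)"
  shows "(\<forall>k. gs k \<in> G) \<and> fin2 (prod_cols qs) \<and>
      (\<forall>gs' q'. (\<forall>k. gs' k \<in> G) \<and> fin2 q' \<longrightarrow>
          Fobj X gs' Z \<tau> q' \<le> Fobj X gs Z \<tau> (prod_cols qs))"
proof -
  have gG: "gs k \<in> G" for k using E[of k] by (simp add: is_EBNM_def)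
  have qd: "is_dist (qs k)" for k using E[of k] by (simp add: is_EBNM_def)
  have opt: "\<And>g' q'. g' \<in> G \<Longrightarrow> is_dist q' \<Longrightarrow> ebnm_obj (yv X Z k) (1/\<tau>) g' q' \<le> ebnm_obj (yv X Z k) (1/\<tau>) (gs k) (qs k)" for k
    using E[of k] by (simp add: is_EBNM_def)
  have lower: "ereal (ln (Mk k g')) \<le> ebnm_obj (yv X Z k) (1/\<tau>) (gs k) (qs k)" if g': "g' \<in> G" for k g'
  proof -
    obtain Q where "is_dist Q" "ebnm_obj (yv X Z k) (1/\<tau>) g' Q = ereal (ln (Mk k g'))"
      using ebnm_attain[OF g'] by blast
    thus ?thesis using opt[OF g'] by metis
  qed
  have val: "ebnm_obj (yv X Z k) (1/\<tau>) (gs k) (qs k) = ereal (ln (Mk k (gs k)))" for k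
    using lower[OF gG[of k], of k] ebnm_upper[OF gG[of k] qd[of k], of k] by (rule antisym[rotated])
  define Pv where "Pv k = (prior_vec (gs k) :: (real^'p) measure)" for k
  have Pvd: "is_dist (Pv k)" for k unfolding Pv_def by (rule Pv_dist[OF gG])
  have Pp: "prob_space (Pv k)" and Ps: "sets (Pv k) = sets borel" for k using Pvd[of k] by (auto simp: is_dist_def)
  have Qp: "prob_space (qs k)" and Qs: "sets (qs k) = sets borel" for k using qd[of k] by (auto simp: is_dist_def)
  have fin: "ext_exp (qs k) (fk X Z \<tau> k) - KL (qs k) (Pv k) = ereal (ln (Mk k (gs k)))" for k
    using val[of k] by (simp add: ebnm_fk Pv_def)
  note fp = finite_parts[OF Pp Qp _ fk_measP[OF Pvd] fk_le[OF t] fin]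
  have iF: "integrable (qs k) (fk X Z \<tau> k)" for k using fp(1) Ps Qs by simp
  have AC: "absolutely_continuous (Pv k) (qs k)" for k using fp(2) Ps Qs by simp
  have iL: "integrable (qs k) (\<lambda>x. ln (enn2real (RN_deriv (Pv k) (qs k) x)))" for k using fp(3) Ps Qs by simp
  have lnM: "ln (Mk k (gs k)) = integral\<^sup>L (qs k) (fk X Z \<tau> k) - (\<integral>x. ln (enn2real (RN_deriv (Pv k) (qs k) x)) \<partial>qs k)" for k
    using fp(4) Ps Qs by simp
  define Bp where "Bp = - real CARD('p) * ln (2*pi/\<tau>) / 2"
  define h2 where "h2 = (\<lambda>v::real^'p. \<Sum>p\<in>UNIV. (v$p)\<^sup>2)"
  have ih2: "integrable (qs k) h2" for k
  proof -
    define sk where "sk = (\<lambda>v::real^'p. \<Sum>p\<in>UNIV. (yv X Z k $ p - v$p)\<^sup>2)"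
    have skE: "sk = (\<lambda>v. (Bp - fk X Z \<tau> k v) * (2 / \<tau>))"
      using t by (auto simp: sk_def Bp_def fk_eq[OF t] field_simps)
    interpret Qk: prob_space "qs k" by (rule Qp)
    have "integrable (qs k) (\<lambda>v. (Bp - fk X Z \<tau> k v) * (2 / \<tau>))" using iF[of k] by simp
    hence isk: "integrable (qs k) sk" using skE by simp
    have "integrable (qs k) (\<lambda>v. 2 * sk v + 2 * (\<Sum>p\<in>UNIV. (yv X Z k $ p)\<^sup>2))"
      using isk by simp
    thus ?thesis
    proof (rule Bochner_Integration.integrable_bound)
      show "h2 \<in> borel_measurable (qs k)"
        unfolding measurable_cong_sets[OF Qs refl] h2_def by (intro borel_measurable_continuous_onI continuous_intros)
      show "AE v in qs k. norm (h2 v) \<le> norm (2 * sk v + 2 * (\<Sum>p\<in>UNIV. (yv X Z k $ p)\<^sup>2))"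
      proof (intro AE_I2)
        fix v :: "real^'p"
        have "h2 v \<le> (\<Sum>p\<in>UNIV. 2 * (yv X Z k $ p - v$p)\<^sup>2 + 2 * (yv X Z k $ p)\<^sup>2)"
          unfolding h2_def by (intro sum_mono sq_bound)
        also have "\<dots> = 2 * sk v + 2 * (\<Sum>p\<in>UNIV. (yv X Z k $ p)\<^sup>2)"
          by (simp add: sk_def sum.distrib sum_distrib_left)
        finally have "h2 v \<le> 2 * sk v + 2 * (\<Sum>p\<in>UNIV. (yv X Z k $ p)\<^sup>2)" .
        moreover have "h2 v \<ge> 0" by (simp add: h2_def sum_nonneg)
        ultimately show "norm (h2 v) \<le> norm (2 * sk v + 2 * (\<Sum>p\<in>UNIV. (yv X Z k $ p)\<^sup>2))" by simp
      qed
    qed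
  qed
  have QCd: "is_dist (prod_cols qs :: (real^'k^'p) measure)" by (rule is_dist_prod_cols[OF qd])
  interpret QC: prob_space "prod_cols qs :: (real^'k^'p) measure" using QCd by (simp add: is_dist_def)
  have nsq: "(\<lambda>L::real^'k^'p. (norm L)\<^sup>2) = (\<lambda>L. \<Sum>k\<in>UNIV. h2 (column k L))"
  proof
    fix L :: "real^'k^'p"
    have "(norm L)\<^sup>2 = (\<Sum>p\<in>UNIV. \<Sum>k\<in>UNIV. (L$p$k)\<^sup>2)" by (rule normsq_mat)
    also have "\<dots> = (\<Sum>k\<in>UNIV. \<Sum>p\<in>UNIV. (L$p$k)\<^sup>2)" by (rule sum.swap)
    finally show "(norm L)\<^sup>2 = (\<Sum>k\<in>UNIV. h2 (column k L))" by (simp add: h2_def column_def)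
  qed
  have F2: "fin2 (prod_cols qs)"
    unfolding fin2_def using QCd prod_cols_sum(1)[OF qd, where h = "\<lambda>k. h2"] ih2 nsq by simp
  have llE: "loglik X Z \<tau> = (\<lambda>L. Cc X Z \<tau> + (\<Sum>k\<in>UNIV. fk X Z \<tau> k (column k L)))"
    by (rule ext) (rule loglik_decomp[OF t Z])
  have iS: "integrable (prod_cols qs) (\<lambda>L::real^'k^'p. \<Sum>k\<in>UNIV. fk X Z \<tau> k (column k L))"
    and IS: "integral\<^sup>L (prod_cols qs) (\<lambda>L::real^'k^'p. \<Sum>k\<in>UNIV. fk X Z \<tau> k (column k L)) = (\<Sum>k\<in>UNIV. integral\<^sup>L (qs k) (fk X Z \<tau> k))"
    using prod_cols_sum[OF qd, where h = "\<lambda>k. fk X Z \<tau> k"] iF by auto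
  have EL: "ext_exp (prod_cols qs) (loglik X Z \<tau>) = ereal (Cc X Z \<tau> + (\<Sum>k\<in>UNIV. integral\<^sup>L (qs k) (fk X Z \<tau> k)))"
  proof -
    have "integrable (prod_cols qs) (\<lambda>L::real^'k^'p. Cc X Z \<tau> + (\<Sum>k\<in>UNIV. fk X Z \<tau> k (column k L)))"
      using iS by simp
    moreover have "integral\<^sup>L (prod_cols qs) (\<lambda>L::real^'k^'p. Cc X Z \<tau> + (\<Sum>k\<in>UNIV. fk X Z \<tau> k (column k L)))
        = Cc X Z \<tau> + (\<Sum>k\<in>UNIV. integral\<^sup>L (qs k) (fk X Z \<tau> k))"
      by (subst Bochner_Integration.integral_add) (auto simp: iS IS QC.prob_space)
    ultimately show ?thesis unfolding llE by (subst ext_exp_integrable) auto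
  qed
  have gsd: "is_dist (gs k)" for k using G_dists gG by auto
  have KLv: "KL (prod_cols qs) (prior_mat gs) = ereal (\<Sum>k\<in>UNIV. \<integral>x. ln (enn2real (RN_deriv (Pv k) (qs k) x)) \<partial>qs k)"
    unfolding prior_mat_cols[OF gsd] Pv_def[symmetric] by (rule KL_prod[OF Pvd qd AC iL])
  have FV: "Fobj X gs Z \<tau> (prod_cols qs) = ereal (Cc X Z \<tau> + (\<Sum>k\<in>UNIV. ln (Mk k (gs k))))"
    unfolding Fobj_def EL KLv lnM by (simp add: sum_subtractf)
  have bound: "Fobj X gs' Z \<tau> q' \<le> Fobj X gs Z \<tau> (prod_cols qs)"
    if g': "\<forall>k. gs' k \<in> G" and q': "fin2 q'" for gs' :: "'k \<Rightarrow> real measure" and q' :: "(real^'k^'p) measure"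
  proof -
    have gsd': "is_dist (gs' k)" for k using G_dists g' by auto
    define Pv' where "Pv' k = (prior_vec (gs' k) :: (real^'p) measure)" for k
    have Pvd': "is_dist (Pv' k)" for k unfolding Pv'_def using g' by (intro Pv_dist) auto
    have PMd: "is_dist (prior_mat gs' :: (real^'k^'p) measure)" by (rule is_dist_prior_mat[OF gsd'])
    have PMp: "prob_space (prior_mat gs' :: (real^'k^'p) measure)" and PMs: "sets (prior_mat gs' :: (real^'k^'p) measure) = sets borel"
      using PMd by (auto simp: is_dist_def)
    have Q'p: "prob_space q'" and Q's: "sets q' = sets borel" using q' by (auto simp: fin2_def is_dist_def)
    have llm: "loglik X Z \<tau> \<in> borel_measurable (prior_mat gs' :: (real^'k^'p) measure)"
      unfolding measurable_cong_sets[OF PMs refl] by (rule loglik_meas[OF t])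
    have G1: "Fobj X gs' Z \<tau> q' \<le> ereal (ln (\<integral>L. exp (loglik X Z \<tau> L) \<partial>(prior_mat gs' :: (real^'k^'p) measure)))"
      unfolding Fobj_def by (rule gibbs[OF PMp Q'p _ llm loglik_le[OF t]]) (simp add: PMs Q's)
    have ie: "integrable (Pv' k) (\<lambda>x. exp (fk X Z \<tau> k x))" for k
      using exp_integral_pos(1)[OF _ fk_measP[OF Pvd'] fk_le[OF t]] Pvd' by (auto simp: is_dist_def)
    have "(\<integral>L. exp (loglik X Z \<tau> L) \<partial>(prior_mat gs' :: (real^'k^'p) measure))
        = (\<integral>L. exp (Cc X Z \<tau>) * (\<Prod>k\<in>UNIV. exp (fk X Z \<tau> k (column k L))) \<partial>prod_cols Pv')"
      unfolding prior_mat_cols[OF gsd'] Pv'_def[symmetric] llE by (simp add: exp_add exp_sum)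
    also have "\<dots> = exp (Cc X Z \<tau>) * (\<Prod>k\<in>UNIV. Mk k (gs' k))"
      using prod_cols_prod[of Pv' "\<lambda>k x. exp (fk X Z \<tau> k x)", OF Pvd' ie] by (simp add: Mk_def Pv'_def)
    finally have IE: "(\<integral>L. exp (loglik X Z \<tau> L) \<partial>(prior_mat gs' :: (real^'k^'p) measure)) = exp (Cc X Z \<tau>) * (\<Prod>k\<in>UNIV. Mk k (gs' k))" .
    have Mp': "Mk k (gs' k) > 0" for k using g' by (intro Mk_pos) auto
    have pp: "(\<Prod>k\<in>UNIV. Mk k (gs' k)) > 0" by (rule prod_pos) (use Mp' in auto)
    have l1: "ln (exp (Cc X Z \<tau>) * (\<Prod>k\<in>UNIV. Mk k (gs' k))) = Cc X Z \<tau> + ln (\<Prod>k\<in>UNIV. Mk k (gs' k))"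
      using pp by (subst ln_mult_pos) auto
    have l2: "ln (\<Prod>k\<in>UNIV. Mk k (gs' k)) = (\<Sum>k\<in>UNIV. ln (Mk k (gs' k)))"
    proof (rule ln_prod)
      fix k show "Mk k (gs' k) \<noteq> 0" using Mp'[of k] by linarith
    qed simp
    have "ln (exp (Cc X Z \<tau>) * (\<Prod>k\<in>UNIV. Mk k (gs' k))) = Cc X Z \<tau> + (\<Sum>k\<in>UNIV. ln (Mk k (gs' k)))"
      using l1 l2 by simp
    also have "\<dots> \<le> Cc X Z \<tau> + (\<Sum>k\<in>UNIV. ln (Mk k (gs k)))"
    proof -
      have "ln (Mk k (gs' k)) \<le> ln (Mk k (gs k))" for k
      proof -
        have "ereal (ln (Mk k (gs' k))) \<le> ereal (ln (Mk k (gs k)))"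
          using lower[of "gs' k" k] g' unfolding val[of k] by blast
        thus ?thesis by simp
      qed
      thus ?thesis by (intro add_left_mono sum_mono) auto
    qed
    finally have "ereal (ln (exp (Cc X Z \<tau>) * (\<Prod>k\<in>UNIV. Mk k (gs' k)))) \<le> ereal (Cc X Z \<tau> + (\<Sum>k\<in>UNIV. ln (Mk k (gs k))))"
      by simp
    with G1 show ?thesis unfolding IE FV by (rule order_trans)
  qed
  show ?thesis using gG F2 bound by blast
qed

end


lemma ereal_sub_mono: "a \<le> b \<Longrightarrow> ereal a - K \<le> ereal b - K"
  by (cases K) auto

lemma precision_real:
  fixes c S t t' :: real
  assumes c: "c > 0" and S: "S > 0" and t': "t' > 0"
  shows "- c * ln (2*pi/t') / 2 - t' / 2 * S \<le> - c * ln (2*pi/(c / S)) / 2 - (c / S) / 2 * S"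
proof -
  define t where "t = c / S"
  have t: "t > 0" using c S by (simp add: t_def)
  have tS: "t * S = c" using S by (simp add: t_def)
  have l1: "ln (2*pi/t') = ln (2*pi) - ln t'" using t' by (simp add: ln_div)
  have l2: "ln (2*pi/t) = ln (2*pi) - ln t" using t by (simp add: ln_div)
  have x: "ln (t'/t) \<le> t'/t - 1" using t t' by (intro ln_le_minus_one) simp
  have "ln (t'/t) = ln t' - ln t" using t t' by (simp add: ln_div)
  hence "c * (ln t' - ln t) \<le> c * (t'/t - 1)" using x c by (intro mult_left_mono) auto
  also have "c * (t'/t - 1) = t' * S - c" using tS t by (simp add: field_simps)
  finally have "c * (ln t' - ln t) \<le> t' * S - t * S" using tS by simp
  hence "- c * (ln (2*pi) - ln t') / 2 - t' / 2 * S \<le> - c * (ln (2*pi) - ln t) / 2 - t / 2 * S"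
    by (simp add: field_simps)
  thus ?thesis unfolding t_def[symmetric] l1 l2 .
qed

lemma part3:
  fixes X :: "real^'p::finite^'n::finite" and gs :: "'k::finite \<Rightarrow> real measure"
    and Z :: "real^'k^'n" and q :: "(real^'k^'p) measure"
  assumes Z: "Z \<in> stiefel" and F: "fin2 q"
    and S: "frob_sq (X - Z ** transpose (Lbar q)) + (\<Sum>p\<in>UNIV. \<Sum>k\<in>UNIV. Vmat q $ p $ k) > 0"
  shows "let \<tau> = real (CARD('n) * CARD('p)) /
                 (frob_sq (X - Z ** transpose (Lbar q)) + (\<Sum>p\<in>UNIV. \<Sum>k\<in>UNIV. Vmat q $ p $ k))
       in \<forall>\<tau>' > 0. Fobj X gs Z \<tau>' q \<le> Fobj X gs Z \<tau> q"
  unfolding Let_def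
proof (intro allI impI)
  fix t' :: real assume t': "t' > 0"
  define S0 where "S0 = frob_sq (X - Z ** transpose (Lbar q)) + (\<Sum>p\<in>UNIV. \<Sum>k\<in>UNIV. Vmat q $ p $ k)"
  define c where "c = real (CARD('n) * CARD('p))"
  have c: "c > 0" by (simp add: c_def)
  have S0: "S0 > 0" using S by (simp add: S0_def)
  have t: "c / S0 > 0" using c S0 by simp
  have E: "integral\<^sup>L q (sqres X Z) = S0" using E_sqres_V[OF F Z] by (simp add: S0_def)
  show "Fobj X gs Z t' q \<le> Fobj X gs Z (real (CARD('n) * CARD('p)) / (frob_sq (X - Z ** transpose (Lbar q)) + (\<Sum>p\<in>UNIV. \<Sum>k\<in>UNIV. Vmat q $ p $ k))) q"
    unfolding S0_def[symmetric] c_def[symmetric] Fobj_def E_loglik[OF F Z t'] E_loglik[OF F Z t] E c_def[symmetric]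
    by (intro ereal_sub_mono precision_real c S0 t')
qed




lemma quad_orth:
  fixes W :: "real^'k::finite^'n::finite" and v :: "'k \<Rightarrow> real"
  assumes W: "W \<in> stiefel"
  shows "(\<Sum>n\<in>UNIV. (\<Sum>k\<in>UNIV. W$n$k * v k)\<^sup>2) = (\<Sum>k\<in>UNIV. (v k)\<^sup>2)"
proof -
  have "(\<Sum>n\<in>UNIV. (\<Sum>k\<in>UNIV. W$n$k * v k)\<^sup>2)
      = (\<Sum>n\<in>UNIV. \<Sum>k\<in>UNIV. \<Sum>j\<in>UNIV. (W$n$k * W$n$j) * (v k * v j))"
    by (simp add: power2_eq_square sum_product mult_ac)
  also have "\<dots> = (\<Sum>k\<in>UNIV. \<Sum>j\<in>UNIV. (\<Sum>n\<in>UNIV. W$n$k * W$n$j) * (v k * v j))"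
    by (simp add: sum_distrib_right sum.swap[of _ "UNIV::'n set"])
  also have "\<dots> = (\<Sum>k\<in>UNIV. \<Sum>j\<in>UNIV. (if k = j then v k * v j else 0))"
  proof -
    have d: "(if k = j then 1 else 0) * a = (if k = j then a else 0)" for k j :: 'k and a :: real by simp
    show ?thesis using stiefel_ortho[OF W] by (simp only: d)
  qed
  also have "\<dots> = (\<Sum>k\<in>UNIV. (v k)\<^sup>2)" by (simp add: power2_eq_square)
  finally show ?thesis .
qed

lemma sq_le1: "(x::real)\<^sup>2 \<le> 1 \<Longrightarrow> x \<le> 1"
proof (rule ccontr)
  assume a: "x\<^sup>2 \<le> 1" "\<not> x \<le> 1"
  hence "1 < x * x" by (intro less_1_mult) auto
  thus False using a by (simp add: power2_eq_square)
qed

lemma coef_le1: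
  fixes W U :: "real^'k::finite^'n::finite" and V :: "real^'k^'k"
  assumes W: "W \<in> stiefel" and U: "U \<in> stiefel" and V: "V \<in> stiefel"
  shows "(\<Sum>n\<in>UNIV. U$n$i * (\<Sum>k\<in>UNIV. W$n$k * V$k$i)) \<le> 1"
proof -
  have "(\<Sum>n\<in>UNIV. U$n$i * (\<Sum>k\<in>UNIV. W$n$k * V$k$i))\<^sup>2
     \<le> (\<Sum>n\<in>UNIV. (U$n$i)\<^sup>2) * (\<Sum>n\<in>UNIV. (\<Sum>k\<in>UNIV. W$n$k * V$k$i)\<^sup>2)"
    by (rule Cauchy_Schwarz_ineq_sum)
  also have "(\<Sum>n\<in>UNIV. (U$n$i)\<^sup>2) = 1" using stiefel_ortho[OF U, of i i] by (simp add: power2_eq_square)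
  also have "(\<Sum>n\<in>UNIV. (\<Sum>k\<in>UNIV. W$n$k * V$k$i)\<^sup>2) = 1"
    using quad_orth[OF W, of "\<lambda>k. V$k$i"] stiefel_ortho[OF V, of i i] by (simp add: power2_eq_square)
  finally have "(\<Sum>n\<in>UNIV. U$n$i * (\<Sum>k\<in>UNIV. W$n$k * V$k$i))\<^sup>2 \<le> 1" by simp
  thus ?thesis by (rule sq_le1)
qed

lemma coef_mat:
  fixes U Y :: "real^'k::finite^'n::finite" and V :: "real^'k^'k"
  shows "(\<Sum>n\<in>UNIV. U$n$i * (\<Sum>k\<in>UNIV. Y$n$k * V$k$i)) = (transpose U ** Y ** V)$i$i"
proof -
  have "(\<Sum>n\<in>UNIV. U$n$i * (\<Sum>k\<in>UNIV. Y$n$k * V$k$i)) = (\<Sum>n\<in>UNIV. \<Sum>k\<in>UNIV. U$n$i * Y$n$k * V$k$i)"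
    by (simp add: sum_distrib_left mult_ac)
  also have "\<dots> = (\<Sum>k\<in>UNIV. \<Sum>n\<in>UNIV. U$n$i * Y$n$k * V$k$i)" by (rule sum.swap)
  also have "\<dots> = (transpose U ** Y ** V)$i$i"
    by (simp add: matrix_matrix_mult_def transpose_def sum_distrib_right)
  finally show ?thesis .
qed

lemma coef_eq1:
  fixes U :: "real^'k::finite^'n::finite" and V :: "real^'k^'k"
  assumes U: "U \<in> stiefel" and V: "V \<in> stiefel"
  shows "(\<Sum>n\<in>UNIV. U$n$i * (\<Sum>k\<in>UNIV. (U ** transpose V)$n$k * V$k$i)) = 1"
proof -
  have u: "transpose U ** U = mat 1" and v: "transpose V ** V = mat 1" using U V by (auto simp: stiefel_def)
  have "transpose U ** (U ** transpose V) ** V = (transpose U ** U) ** (transpose V ** V)"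
    by (simp add: matrix_mul_assoc)
  also have "\<dots> = mat 1" by (simp add: u v)
  finally show ?thesis unfolding coef_mat by (simp add: mat_def)
qed

lemma svd_entry:
  assumes "thin_svd M U D V"
  shows "M$n$k = (\<Sum>i\<in>UNIV. U$n$i * D$i$i * V$k$i)"
proof -
  have diag: "\<And>i j. i \<noteq> j \<Longrightarrow> D$i$j = 0" and M: "M = U ** D ** transpose V"
    using assms by (auto simp: thin_svd_def)
  have "M$n$k = (\<Sum>j\<in>UNIV. (\<Sum>i\<in>UNIV. U$n$i * D$i$j) * V$k$j)"
    by (simp add: M matrix_matrix_mult_def transpose_def)
  also have "\<dots> = (\<Sum>j\<in>UNIV. U$n$j * D$j$j * V$k$j)"
  proof (intro sum.cong refl)
    fix j
    have "(\<Sum>i\<in>UNIV. U$n$i * D$i$j) = U$n$j * D$j$j"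
      by (subst sum.remove[of _ j]) (auto simp: diag intro!: sum.neutral)
    thus "(\<Sum>i\<in>UNIV. U$n$i * D$i$j) * V$k$j = U$n$j * D$j$j * V$k$j" by simp
  qed
  finally show ?thesis .
qed

lemma von_neumann:
  fixes M W :: "real^'k::finite^'n::finite"
  assumes svd: "thin_svd M U D V" and W: "W \<in> stiefel"
  shows "(\<Sum>n\<in>UNIV. \<Sum>k\<in>UNIV. W$n$k * M$n$k) \<le> (\<Sum>n\<in>UNIV. \<Sum>k\<in>UNIV. (U ** transpose V)$n$k * M$n$k)"
proof -
  have U: "U \<in> stiefel" and V: "V \<in> stiefel" and Dp: "\<And>i. D$i$i \<ge> 0"
    using svd by (auto simp: thin_svd_def stiefel_def)
  have rep: "(\<Sum>n\<in>UNIV. \<Sum>k\<in>UNIV. Y$n$k * M$n$k) = (\<Sum>i\<in>UNIV. D$i$i * (\<Sum>n\<in>UNIV. U$n$i * (\<Sum>k\<in>UNIV. Y$n$k * V$k$i)))"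
    for Y :: "real^'k^'n"
  proof -
    have "(\<Sum>n\<in>UNIV. \<Sum>k\<in>UNIV. Y$n$k * M$n$k) = (\<Sum>n\<in>UNIV. \<Sum>k\<in>UNIV. \<Sum>i\<in>UNIV. D$i$i * (U$n$i * (Y$n$k * V$k$i)))"
      unfolding svd_entry[OF svd] by (simp add: sum_distrib_left mult_ac)
    also have "\<dots> = (\<Sum>n\<in>UNIV. \<Sum>i\<in>UNIV. \<Sum>k\<in>UNIV. D$i$i * (U$n$i * (Y$n$k * V$k$i)))"
      by (intro sum.cong refl sum.swap)
    also have "\<dots> = (\<Sum>i\<in>UNIV. \<Sum>n\<in>UNIV. \<Sum>k\<in>UNIV. D$i$i * (U$n$i * (Y$n$k * V$k$i)))"
      by (rule sum.swap)
    also have "\<dots> = (\<Sum>i\<in>UNIV. D$i$i * (\<Sum>n\<in>UNIV. U$n$i * (\<Sum>k\<in>UNIV. Y$n$k * V$k$i)))"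
      by (simp add: sum_distrib_left)
    finally show ?thesis .
  qed
  have "(\<Sum>i\<in>UNIV. D$i$i * (\<Sum>n\<in>UNIV. U$n$i * (\<Sum>k\<in>UNIV. W$n$k * V$k$i))) \<le> (\<Sum>i\<in>UNIV. D$i$i * 1)"
    by (intro sum_mono mult_left_mono coef_le1[OF W U V] Dp)
  also have "\<dots> = (\<Sum>i\<in>UNIV. D$i$i * (\<Sum>n\<in>UNIV. U$n$i * (\<Sum>k\<in>UNIV. (U ** transpose V)$n$k * V$k$i)))"
    using coef_eq1[OF U V] by simp
  finally show ?thesis unfolding rep .
qed


lemma T_form:
  fixes X :: "real^'p::finite^'n::finite" and W :: "real^'k::finite^'n" and L :: "real^'k^'p"
  shows "(\<Sum>n\<in>UNIV. \<Sum>p\<in>UNIV. \<Sum>k\<in>UNIV. X$n$p * W$n$k * L$p$k) = (\<Sum>n\<in>UNIV. \<Sum>k\<in>UNIV. W$n$k * (X ** L)$n$k)"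
proof -
  have "(\<Sum>n\<in>UNIV. \<Sum>k\<in>UNIV. W$n$k * (X ** L)$n$k) = (\<Sum>n\<in>UNIV. \<Sum>k\<in>UNIV. \<Sum>p\<in>UNIV. X$n$p * W$n$k * L$p$k)"
    by (simp add: matrix_matrix_mult_def sum_distrib_left mult_ac)
  also have "\<dots> = (\<Sum>n\<in>UNIV. \<Sum>p\<in>UNIV. \<Sum>k\<in>UNIV. X$n$p * W$n$k * L$p$k)"
    by (intro sum.cong refl sum.swap)
  finally show ?thesis by simp
qed

lemma polar_stiefel:
  assumes "thin_svd M U D V"
  shows "U ** transpose V \<in> stiefel"
proof -
  have u: "transpose U ** U = mat 1" and v: "transpose V ** V = mat 1"
    using assms by (auto simp: thin_svd_def stiefel_def)
  have v': "V ** transpose V = mat 1" using v matrix_left_right_inverse by blast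
  have "transpose (U ** transpose V) ** (U ** transpose V) = V ** (transpose U ** U) ** transpose V"
    by (simp add: matrix_transpose_mul matrix_mul_assoc)
  also have "\<dots> = mat 1" by (simp add: u v')
  finally show ?thesis by (simp add: stiefel_def)
qed

lemma part2:
  fixes X :: "real^'p::finite^'n::finite" and gs :: "'k::finite \<Rightarrow> real measure"
    and Z :: "real^'k^'n" and q :: "(real^'k^'p) measure"
  assumes F: "fin2 q" and t: "\<tau> > 0" and P: "is_polarU (X ** Lbar q) Z"
  shows "Z \<in> stiefel \<and> (\<forall>Z' \<in> stiefel. Fobj X gs Z' \<tau> q \<le> Fobj X gs Z \<tau> q)"
proof -
  obtain U D V where svd: "thin_svd (X ** Lbar q) U D V" and Zd: "Z = U ** transpose V"
    using P by (auto simp: is_polarU_def)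
  have Z: "Z \<in> stiefel" using polar_stiefel[OF svd] Zd by simp
  have "Fobj X gs Z' \<tau> q \<le> Fobj X gs Z \<tau> q" if Z': "Z' \<in> stiefel" for Z'
  proof -
    have T: "(\<Sum>n\<in>UNIV. \<Sum>p\<in>UNIV. \<Sum>k\<in>UNIV. X$n$p * Z'$n$k * Lbar q$p$k) \<le> (\<Sum>n\<in>UNIV. \<Sum>p\<in>UNIV. \<Sum>k\<in>UNIV. X$n$p * Z$n$k * Lbar q$p$k)"
      unfolding T_form Zd using von_neumann[OF svd Z'] .
    have "integral\<^sup>L q (sqres X Z) \<le> integral\<^sup>L q (sqres X Z')"
      unfolding E_sqres(2)[OF F Z] E_sqres(2)[OF F Z'] using T by simp
    hence "- real (CARD('n) * CARD('p)) * ln (2*pi/\<tau>) / 2 - \<tau> / 2 * integral\<^sup>L q (sqres X Z')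
         \<le> - real (CARD('n) * CARD('p)) * ln (2*pi/\<tau>) / 2 - \<tau> / 2 * integral\<^sup>L q (sqres X Z)"
      using t by (simp add: mult_left_mono)
    thus ?thesis unfolding Fobj_def E_loglik[OF F Z t] E_loglik[OF F Z' t] by (rule ereal_sub_mono)
  qed
  with Z show ?thesis by blast
qed



theorem proposition1:
  fixes X :: "real^'p::finite^'n::finite"
    and G :: "real measure set"
  assumes G_dists: "\<forall>g\<in>G. is_dist g"
  shows
  \<comment> \<open>(1) EBNM step\<close>
  "(\<forall>(Z :: real^'k::finite^'n) \<tau> gs qs.
      Z \<in> stiefel \<and> \<tau> > 0 \<and>
      (\<forall>k. is_EBNM (transpose X *v column k Z) (1 / \<tau>) G (gs k) (qs k)) \<longrightarrow>
      (\<forall>k. gs k \<in> G) \<and> fin2 (prod_cols qs) \<and>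
      (\<forall>gs' q'. (\<forall>k. gs' k \<in> G) \<and> fin2 q' \<longrightarrow>
          Fobj X gs' Z \<tau> q' \<le> Fobj X gs Z \<tau> (prod_cols qs)))
   \<and>
  \<comment> \<open>(2) rotation step\<close>
   (\<forall>(gs :: 'k \<Rightarrow> real measure) q \<tau> Z.
      (\<forall>k. gs k \<in> G) \<and> fin2 q \<and> \<tau> > 0 \<and> is_polarU (X ** Lbar q) Z \<longrightarrow>
      Z \<in> stiefel \<and> (\<forall>Z' \<in> stiefel. Fobj X gs Z' \<tau> q \<le> Fobj X gs Z \<tau> q))
   \<and>
  \<comment> \<open>(3) precision step\<close>
   (\<forall>(gs :: 'k \<Rightarrow> real measure) (Z :: real^'k^'n) q.
      (\<forall>k. gs k \<in> G) \<and> Z \<in> stiefel \<and> fin2 q \<and>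
      frob_sq (X - Z ** transpose (Lbar q)) + (\<Sum>p\<in>UNIV. \<Sum>k\<in>UNIV. Vmat q $ p $ k) > 0 \<longrightarrow>
      (let \<tau> = real (CARD('n) * CARD('p)) /
                 (frob_sq (X - Z ** transpose (Lbar q)) + (\<Sum>p\<in>UNIV. \<Sum>k\<in>UNIV. Vmat q $ p $ k))
       in \<forall>\<tau>' > 0. Fobj X gs Z \<tau>' q \<le> Fobj X gs Z \<tau> q))"
  apply (rule conjI)
   apply (intro allI impI)
  subgoal premises prems for Z \<tau> gs qs
  proof -
    have Z: "Z \<in> stiefel" and t: "\<tau> > 0" and E: "\<And>k. is_EBNM (yv X Z k) (1 / \<tau>) G (gs k) (qs k)"
      using prems by (auto simp: yv_def)
    show ?thesis by (rule part1_main[OF G_dists Z t E])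
  qed
  apply (rule conjI)
   apply (intro allI impI)
  subgoal by (rule part2) auto
  apply (intro allI impI)
  subgoal by (rule part3) auto
  done

end
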